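(* Let $k$ be a field of characteristic $p>0$ and let $G=H\times C$ be a finite group scheme over $k$, where $H$ is a finite group scheme over $k$ and $C$ is the group scheme of a cyclic group of order $p$ with generator $z$; put $Z=z-1$, so $kC\cong k[Z]/(Z^p)$ and $kG\cong kH\otimes k[Z]/(Z^p)$. Let $C_*$ and $D_*$ be chain complexes of $kH$-modules concentrated in nonnegative degrees, and let $M(C_*,n)$, $M(D_*,n)$ be the resolution modules defined in the context. Then: (1) Any chain map $\sigma:C_*\to D_*$ (degree preserving, $\sigma_i:C_i\to D_i$) induces a $kG$-homomorphism $M(\sigma):M(C_*,n)\to M(D_*,n)$, given on each $kH$-summand by the corresponding component of $\sigma$, for every positive integer $n$ and for $n=\infty$. (2) For every positive integer $n$ and for $n=\infty$, $M(C_*\oplus D_*,n)\cong M(C_*,n)\oplus M(D_*,n)$. (3) If $J$ is a subgroup scheme of $H$, then the restriction of $M(C_*,n)$ to $J\times C$ is isomorphic to $M((C_* )_{\downarrow kJ},n)$, where $(C_* )_{\downarrow kJ}$ is $C_*$ regarded as a complex of $kJ$-modules. (4) If $C_*$ is an exact complex of projective $kH$-modules, then $M(C_*,\infty)$ is zero in the stable module category $\mathbf{StMod}(kG)$ (i.e. it is projective). (5) If $C_*$ and $D_*$ are projective resolutions of the same $kH$-module $N$, then $M(C_*,\infty)\cong M(D_*,\infty)$ in $\mathbf{StMod}(kG)$.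
   Context: A $kG$-module is the same as a $kH$-module together with a $kH$-linear endomorphism $Z$ with $Z^p=0$. For a complex $\cdots\to C_2\xrightarrow{\partial}C_1\xrightarrow{\partial}C_0\to 0$ of $kH$-modules and a positive integer $n$, the resolution module $M(C_*,n)$ is the $kG$-module whose restriction to $kH$ is $C_0\oplus C_1^{p-1}\oplus C_2\oplus C_3^{p-1}\oplus\cdots\oplus C_{2n-1}^{p-1}$, with $Z$ acting as follows: for $i$ odd and $(m_1,\dots,m_{p-1})\in C_i^{p-1}$, $Z(m_1,\dots,m_{p-1})=(0,m_1,\dots,m_{p-2})+\partial(m_{p-1})\in C_i^{p-1}\oplus C_{i-1}$; for $m\in C_0$, $Zm=0$; for $m\in C_{2j}$ with $j>0$, $Zm=(\partial(m),0,\dots,0)\in C_{2j-1}^{p-1}$. These form a nested sequence $M(C_*,1)\subseteq M(C_*,2)\subseteq\cdots$ and $M(C_*,\infty)$ is the union, whose restriction to $kH$ is $\bigoplus_{i\ge0}(C_{2i}\oplus C_{2i+1}^{p-1})$ with the same $Z$-action. $\mathbf{StMod}(kG)$ denotes the stable category of all $kG$-modules modulo projectives. *)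

theory Defs
  imports Main "HOL-Library.Function_Algebras" "HOL-Library.Product_Plus"
          "HOL-Library.Extended_Nat"
begin

text \<open>A finite group scheme H over k is encoded by its group algebra kH, a
finite-dimensional cocommutative Hopf algebra over k, given by structure constants
with respect to a basis indexed by a finite type 'b.  Elements of kH are coefficient
vectors 'b => 'k.
  e_i e_j = sum_l mc i j l e_l ;  1 = sum_l un l e_l ;
  Delta e_l = sum_{i,j} dc l i j (e_i (x) e_j) ;  eps e_l = ep l ;  S e_i = sum_m sc i m e_m.\<close>

record ('b, 'k) hopf =
  mc :: "'b \<Rightarrow> 'b \<Rightarrow> 'b \<Rightarrow> 'k"
  un :: "'b \<Rightarrow> 'k"
  dc :: "'b \<Rightarrow> 'b \<Rightarrow> 'b \<Rightarrow> 'k"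
  ep :: "'b \<Rightarrow> 'k"
  sc :: "'b \<Rightarrow> 'b \<Rightarrow> 'k"

definition kron :: "'a \<Rightarrow> 'a \<Rightarrow> 'k::field" where
  "kron a b = (if a = b then 1 else 0)"

definition finite_group_scheme :: "('b::finite, 'k::field) hopf \<Rightarrow> bool" where
  "finite_group_scheme H \<longleftrightarrow>
     \<comment> \<open>associativity and unit\<close>
     (\<forall>i j k m. (\<Sum>l\<in>UNIV. mc H i j l * mc H l k m) = (\<Sum>l\<in>UNIV. mc H j k l * mc H i l m)) \<and>
     (\<forall>j l. (\<Sum>i\<in>UNIV. un H i * mc H i j l) = kron j l) \<and>
     (\<forall>j l. (\<Sum>i\<in>UNIV. un H i * mc H j i l) = kron j l) \<and>
     \<comment> \<open>coassociativity, counit, cocommutativity\<close>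
     (\<forall>l a b c. (\<Sum>m\<in>UNIV. dc H l m c * dc H m a b) = (\<Sum>m\<in>UNIV. dc H l a m * dc H m b c)) \<and>
     (\<forall>l j. (\<Sum>i\<in>UNIV. ep H i * dc H l i j) = kron l j) \<and>
     (\<forall>l i. (\<Sum>j\<in>UNIV. ep H j * dc H l i j) = kron l i) \<and>
     (\<forall>l i j. dc H l i j = dc H l j i) \<and>
     \<comment> \<open>comultiplication and counit are algebra maps\<close>
     (\<forall>i j a b. (\<Sum>l\<in>UNIV. mc H i j l * dc H l a b) =
        (\<Sum>a1\<in>UNIV. \<Sum>b1\<in>UNIV. \<Sum>a2\<in>UNIV. \<Sum>b2\<in>UNIV. dc H i a1 b1 * dc H j a2 b2 * mc H a1 a2 a * mc H b1 b2 b)) \<and>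
     (\<forall>a b. (\<Sum>l\<in>UNIV. un H l * dc H l a b) = un H a * un H b) \<and>
     (\<forall>i j. (\<Sum>l\<in>UNIV. mc H i j l * ep H l) = ep H i * ep H j) \<and>
     (\<Sum>l\<in>UNIV. un H l * ep H l) = 1 \<and>
     \<comment> \<open>antipode\<close>
     (\<forall>l c. (\<Sum>i\<in>UNIV. \<Sum>j\<in>UNIV. \<Sum>m\<in>UNIV. dc H l i j * sc H i m * mc H m j c) = ep H l * un H c) \<and>
     (\<forall>l c. (\<Sum>i\<in>UNIV. \<Sum>j\<in>UNIV. \<Sum>m\<in>UNIV. dc H l i j * sc H j m * mc H i m c) = ep H l * un H c)"

definition hmult :: "('b::finite, 'k::field) hopf \<Rightarrow> ('b \<Rightarrow> 'k) \<Rightarrow> ('b \<Rightarrow> 'k) \<Rightarrow> ('b \<Rightarrow> 'k)" where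
  "hmult H x y = (\<lambda>l. \<Sum>i\<in>UNIV. \<Sum>j\<in>UNIV. x i * y j * mc H i j l)"

definition hcomult :: "('b::finite, 'k::field) hopf \<Rightarrow> ('b \<Rightarrow> 'k) \<Rightarrow> ('b \<Rightarrow> 'b \<Rightarrow> 'k)" where
  "hcomult H x = (\<lambda>i j. \<Sum>l\<in>UNIV. x l * dc H l i j)"

definition hantipode :: "('b::finite, 'k::field) hopf \<Rightarrow> ('b \<Rightarrow> 'k) \<Rightarrow> ('b \<Rightarrow> 'k)" where
  "hantipode H x = (\<lambda>m. \<Sum>i\<in>UNIV. x i * sc H i m)"

definition tensor_span :: "('b \<Rightarrow> 'k::field) set \<Rightarrow> ('b \<Rightarrow> 'b \<Rightarrow> 'k) set" where
  "tensor_span J = {t. \<exists>(n::nat) f g. (\<forall>q<n. f q \<in> J \<and> g q \<in> J) \<and>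
                          t = (\<lambda>i j. \<Sum>q<n. f q i * g q j)}"

text \<open>Subgroup schemes J of H correspond to Hopf subalgebras kJ of kH.\<close>
definition subgroup_scheme :: "('b::finite, 'k::field) hopf \<Rightarrow> ('b \<Rightarrow> 'k) set \<Rightarrow> bool" where
  "subgroup_scheme H J \<longleftrightarrow>
     0 \<in> J \<and> (\<forall>x\<in>J. \<forall>y\<in>J. x + y \<in> J) \<and> (\<forall>c. \<forall>x\<in>J. (\<lambda>i. c * x i) \<in> J) \<and>
     un H \<in> J \<and> (\<forall>x\<in>J. \<forall>y\<in>J. hmult H x y \<in> J) \<and>
     (\<forall>x\<in>J. hcomult H x \<in> tensor_span J) \<and> (\<forall>x\<in>J. hantipode H x \<in> J)"

text \<open>A module over the subalgebra S of kH (S = UNIV: kH-modules; S = kJ: kJ-modules),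
carried by a subset of an abelian group type 'v.  A kG-module (G = H x C, C cyclic of
order p) is such a module together with an S-linear endomorphism Z with Z^p = 0.\<close>

record ('v, 'b, 'k) hmod =
  car :: "'v set"
  act :: "('b \<Rightarrow> 'k) \<Rightarrow> 'v \<Rightarrow> 'v"

record ('v, 'b, 'k) gmod = "('v, 'b, 'k) hmod" +
  zop :: "'v \<Rightarrow> 'v"

definition is_hmod :: "('b::finite, 'k::field) hopf \<Rightarrow> ('b \<Rightarrow> 'k) set
    \<Rightarrow> ('v::ab_group_add, 'b, 'k, 'z) hmod_scheme \<Rightarrow> bool" where
  "is_hmod H S M \<longleftrightarrow>
     0 \<in> car M \<and> (\<forall>v\<in>car M. \<forall>w\<in>car M. v + w \<in> car M) \<and> (\<forall>v\<in>car M. - v \<in> car M) \<and>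
     (\<forall>a\<in>S. \<forall>v\<in>car M. act M a v \<in> car M) \<and>
     (\<forall>a\<in>S. \<forall>v\<in>car M. \<forall>w\<in>car M. act M a (v + w) = act M a v + act M a w) \<and>
     (\<forall>a\<in>S. \<forall>b\<in>S. \<forall>v\<in>car M. act M (a + b) v = act M a v + act M b v) \<and>
     (\<forall>a\<in>S. \<forall>b\<in>S. \<forall>v\<in>car M. act M (hmult H a b) v = act M a (act M b v)) \<and>
     (\<forall>v\<in>car M. act M (un H) v = v)"

definition is_gmod :: "nat \<Rightarrow> ('b::finite, 'k::field) hopf \<Rightarrow> ('b \<Rightarrow> 'k) set
    \<Rightarrow> ('v::ab_group_add, 'b, 'k) gmod \<Rightarrow> bool" where
  "is_gmod p H S M \<longleftrightarrow> is_hmod H S M \<and>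
     (\<forall>v\<in>car M. zop M v \<in> car M) \<and>
     (\<forall>v\<in>car M. \<forall>w\<in>car M. zop M (v + w) = zop M v + zop M w) \<and>
     (\<forall>a\<in>S. \<forall>v\<in>car M. zop M (act M a v) = act M a (zop M v)) \<and>
     (\<forall>v\<in>car M. (zop M ^^ p) v = 0)"

definition is_hhom :: "('b \<Rightarrow> 'k) set \<Rightarrow> ('v::ab_group_add, 'b, 'k, 'z1) hmod_scheme
    \<Rightarrow> ('w::ab_group_add, 'b, 'k, 'z2) hmod_scheme \<Rightarrow> ('v \<Rightarrow> 'w) \<Rightarrow> bool" where
  "is_hhom S M N f \<longleftrightarrow> (\<forall>v\<in>car M. f v \<in> car N) \<and>
     (\<forall>v\<in>car M. \<forall>w\<in>car M. f (v + w) = f v + f w) \<and>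
     (\<forall>a\<in>S. \<forall>v\<in>car M. f (act M a v) = act N a (f v))"

definition is_ghom :: "('b \<Rightarrow> 'k) set \<Rightarrow> ('v::ab_group_add, 'b, 'k) gmod
    \<Rightarrow> ('w::ab_group_add, 'b, 'k) gmod \<Rightarrow> ('v \<Rightarrow> 'w) \<Rightarrow> bool" where
  "is_ghom S M N f \<longleftrightarrow> is_hhom S M N f \<and> (\<forall>v\<in>car M. f (zop M v) = zop N (f v))"

definition is_giso :: "('b \<Rightarrow> 'k) set \<Rightarrow> ('v::ab_group_add, 'b, 'k) gmod
    \<Rightarrow> ('w::ab_group_add, 'b, 'k) gmod \<Rightarrow> ('v \<Rightarrow> 'w) \<Rightarrow> bool" where
  "is_giso S M N f \<longleftrightarrow> is_ghom S M N f \<and> bij_betw f (car M) (car N)"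

definition gsum :: "('v::ab_group_add, 'b, 'k) gmod \<Rightarrow> ('w::ab_group_add, 'b, 'k) gmod
    \<Rightarrow> ('v \<times> 'w, 'b, 'k) gmod" where
  "gsum M N = \<lparr> car = car M \<times> car N,
                act = (\<lambda>a (v, w). (act M a v, act N a w)),
                zop = (\<lambda>(v, w). (zop M v, zop N w)) \<rparr>"

definition gres :: "('b \<Rightarrow> 'k) set \<Rightarrow> ('v::ab_group_add, 'b, 'k) gmod \<Rightarrow> ('v, 'b, 'k) gmod" where
  "gres J M = M \<lparr> act := (\<lambda>a v. if a \<in> J then act M a v else 0) \<rparr>"

definition hfree :: "('b::finite, 'k::field) hopf \<Rightarrow> 'v set \<Rightarrow> ('v \<Rightarrow> 'b \<Rightarrow> 'k, 'b, 'k) hmod" where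
  "hfree H X = \<lparr> car = {f. finite {v. f v \<noteq> 0} \<and> (\<forall>v. v \<notin> X \<longrightarrow> f v = 0)},
                 act = (\<lambda>a f v. hmult H a (f v)) \<rparr>"

text \<open>Free kG-module with basis X, where kG = kH (x) k[Z]/(Z^p): an element of kG is
written sum_{j<p} a_j Z^j, stored as j |-> a_j.\<close>
definition gfree :: "nat \<Rightarrow> ('b::finite, 'k::field) hopf \<Rightarrow> 'v set
    \<Rightarrow> ('v \<Rightarrow> nat \<Rightarrow> 'b \<Rightarrow> 'k, 'b, 'k) gmod" where
  "gfree p H X = \<lparr> car = {f. finite {(v, j). f v j \<noteq> 0} \<and>
                             (\<forall>v j. v \<notin> X \<or> p \<le> j \<longrightarrow> f v j = 0)},
                   act = (\<lambda>a f v j. hmult H a (f v j)),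
                   zop = (\<lambda>f v j. if j = 0 \<or> p \<le> j then 0 else f v (j - 1)) \<rparr>"

text \<open>Projective = direct summand of a free module (here: the free module on the
underlying set, which suffices).\<close>
definition hproj :: "('b::finite, 'k::field) hopf \<Rightarrow> ('v::ab_group_add, 'b, 'k, 'z) hmod_scheme \<Rightarrow> bool" where
  "hproj H P \<longleftrightarrow> is_hmod H UNIV P \<and>
     (\<exists>i r. is_hhom UNIV P (hfree H (car P)) i \<and> is_hhom UNIV (hfree H (car P)) P r \<and>
            (\<forall>v\<in>car P. r (i v) = v))"

definition gproj :: "nat \<Rightarrow> ('b::finite, 'k::field) hopf \<Rightarrow> ('v::ab_group_add, 'b, 'k) gmod \<Rightarrow> bool" where
  "gproj p H P \<longleftrightarrow> is_gmod p H UNIV P \<and>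
     (\<exists>i r. is_ghom UNIV P (gfree p H (car P)) i \<and> is_ghom UNIV (gfree p H (car P)) P r \<and>
            (\<forall>v\<in>car P. r (i v) = v))"

text \<open>A kG-map f : M -> N is zero in StMod(kG) iff it factors through a projective
module.  Every such map factors through a projective (indeed free) module carried by
the type 'w => nat => 'b => 'k (the free module on the carrier of N), so we fix this
carrier type for the witness.\<close>
definition stably_zero :: "nat \<Rightarrow> ('b::finite, 'k::field) hopf \<Rightarrow> ('v::ab_group_add, 'b, 'k) gmod
    \<Rightarrow> ('w::ab_group_add, 'b, 'k) gmod \<Rightarrow> ('v \<Rightarrow> 'w) \<Rightarrow> bool" where
  "stably_zero p H M N f \<longleftrightarrow>
     (\<exists>(P :: ('w \<Rightarrow> nat \<Rightarrow> 'b \<Rightarrow> 'k, 'b, 'k) gmod) \<alpha> \<beta>. gproj p H P \<and>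
        is_ghom UNIV M P \<alpha> \<and> is_ghom UNIV P N \<beta> \<and> (\<forall>v\<in>car M. f v = \<beta> (\<alpha> v)))"

definition stable_iso :: "nat \<Rightarrow> ('b::finite, 'k::field) hopf \<Rightarrow> ('v::ab_group_add, 'b, 'k) gmod
    \<Rightarrow> ('w::ab_group_add, 'b, 'k) gmod \<Rightarrow> bool" where
  "stable_iso p H M N \<longleftrightarrow>
     (\<exists>f g. is_ghom UNIV M N f \<and> is_ghom UNIV N M g \<and>
        stably_zero p H M M (\<lambda>v. g (f v) - v) \<and> stably_zero p H N N (\<lambda>w. f (g w) - w))"

text \<open>cc i is C_i, cact i its action, dd (Suc i) : C_(i+1) -> C_i the differential
(dd 0 is unused: C_0 -> 0).\<close>
record ('c, 'b, 'k) cx =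
  cc :: "nat \<Rightarrow> 'c set"
  cact :: "nat \<Rightarrow> ('b \<Rightarrow> 'k) \<Rightarrow> 'c \<Rightarrow> 'c"
  dd :: "nat \<Rightarrow> 'c \<Rightarrow> 'c"

definition cx_deg :: "('c, 'b, 'k) cx \<Rightarrow> nat \<Rightarrow> ('c, 'b, 'k) hmod" where
  "cx_deg C i = \<lparr> car = cc C i, act = cact C i \<rparr>"

definition is_cx :: "('b::finite, 'k::field) hopf \<Rightarrow> ('b \<Rightarrow> 'k) set \<Rightarrow> ('c::ab_group_add, 'b, 'k) cx \<Rightarrow> bool" where
  "is_cx H S C \<longleftrightarrow> (\<forall>i. is_hmod H S (cx_deg C i)) \<and>
     (\<forall>i. is_hhom S (cx_deg C (Suc i)) (cx_deg C i) (dd C (Suc i))) \<and>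
     (\<forall>i. \<forall>x\<in>cc C (Suc (Suc i)). dd C (Suc i) (dd C (Suc (Suc i)) x) = 0)"

definition is_chain_map :: "('b \<Rightarrow> 'k) set \<Rightarrow> ('c::ab_group_add, 'b, 'k) cx \<Rightarrow> ('d::ab_group_add, 'b, 'k) cx
    \<Rightarrow> (nat \<Rightarrow> 'c \<Rightarrow> 'd) \<Rightarrow> bool" where
  "is_chain_map S C D \<sigma> \<longleftrightarrow> (\<forall>i. is_hhom S (cx_deg C i) (cx_deg D i) (\<sigma> i)) \<and>
     (\<forall>i. \<forall>x\<in>cc C (Suc i). \<sigma> i (dd C (Suc i) x) = dd D (Suc i) (\<sigma> (Suc i) x))"

definition cx_sum :: "('c, 'b, 'k) cx \<Rightarrow> ('d, 'b, 'k) cx \<Rightarrow> ('c \<times> 'd, 'b, 'k) cx" where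
  "cx_sum C D = \<lparr> cc = (\<lambda>i. cc C i \<times> cc D i),
                  cact = (\<lambda>i a (x, y). (cact C i a x, cact D i a y)),
                  dd = (\<lambda>i (x, y). (dd C i x, dd D i y)) \<rparr>"

definition cx_res :: "('b \<Rightarrow> 'k) set \<Rightarrow> ('c::zero, 'b, 'k) cx \<Rightarrow> ('c, 'b, 'k) cx" where
  "cx_res J C = C \<lparr> cact := (\<lambda>i a x. if a \<in> J then cact C i a x else 0) \<rparr>"

text \<open>Exact complex (including exactness at C_0, i.e. dd 1 onto C_0).\<close>
definition cx_exact :: "('c::ab_group_add, 'b, 'k) cx \<Rightarrow> bool" where
  "cx_exact C \<longleftrightarrow> (\<forall>i. {x \<in> cc C i. i = 0 \<or> dd C i x = 0} = dd C (Suc i) ` cc C (Suc i))"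

definition proj_resolution :: "('b::finite, 'k::field) hopf \<Rightarrow> ('c::ab_group_add, 'b, 'k) cx
    \<Rightarrow> ('n::ab_group_add, 'b, 'k) hmod \<Rightarrow> ('c \<Rightarrow> 'n) \<Rightarrow> bool" where
  "proj_resolution H C N eps \<longleftrightarrow> is_cx H UNIV C \<and> is_hmod H UNIV N \<and>
     (\<forall>i. hproj H (cx_deg C i)) \<and>
     is_hhom UNIV (cx_deg C 0) N eps \<and> eps ` cc C 0 = car N \<and>
     {x \<in> cc C 0. eps x = 0} = dd C 1 ` cc C 1 \<and>
     (\<forall>i. {x \<in> cc C (Suc i). dd C (Suc i) x = 0} = dd C (Suc (Suc i)) ` cc C (Suc (Suc i)))"

text \<open>An element of M(C_*, n) is stored as x :: nat => nat => 'c where x i j is the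
j-th coordinate in the summand of degree i: for i even there is one coordinate
(j = 0), for i odd there are p - 1 coordinates (j < p - 1), i.e. C_i^(p-1).  Only
degrees i < 2n occur (n = infinity allowed, n :: enat), with finite support.\<close>
definition Mcar :: "nat \<Rightarrow> ('c::ab_group_add, 'b, 'k) cx \<Rightarrow> enat \<Rightarrow> (nat \<Rightarrow> nat \<Rightarrow> 'c) set" where
  "Mcar p C n = {x. finite {(i, j). x i j \<noteq> 0} \<and>
      (\<forall>i j. if enat i < 2 * n \<and> (if odd i then j < p - 1 else j = 0)
             then x i j \<in> cc C i else x i j = 0)}"

text \<open>Z-action: on C_i^(p-1) (i odd), (m_1..m_(p-1)) |-> (0, m_1, .., m_(p-2)) + d(m_(p-1));
on C_(2j), j > 0, m |-> (d m, 0, .., 0); on C_0 zero.  Written componentwise.\<close>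
definition MZ :: "nat \<Rightarrow> ('c::ab_group_add, 'b, 'k) cx \<Rightarrow> (nat \<Rightarrow> nat \<Rightarrow> 'c) \<Rightarrow> (nat \<Rightarrow> nat \<Rightarrow> 'c)" where
  "MZ p C x = (\<lambda>i j.
     if odd i then
       (if j = 0 then dd C (Suc i) (x (Suc i) 0)
        else if j < p - 1 then x i (j - 1) else 0)
     else
       (if j = 0 then dd C (Suc i) (x (Suc i) (p - 2)) else 0))"

definition Mmod :: "nat \<Rightarrow> ('c::ab_group_add, 'b, 'k) cx \<Rightarrow> enat \<Rightarrow> (nat \<Rightarrow> nat \<Rightarrow> 'c, 'b, 'k) gmod" where
  "Mmod p C n = \<lparr> car = Mcar p C n,
                  act = (\<lambda>a x i j. cact C i a (x i j)),
                  zop = MZ p C \<rparr>"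

definition Mmap :: "(nat \<Rightarrow> 'c \<Rightarrow> 'd) \<Rightarrow> (nat \<Rightarrow> nat \<Rightarrow> 'c) \<Rightarrow> (nat \<Rightarrow> nat \<Rightarrow> 'd)" where
  "Mmap \<sigma> x = (\<lambda>i j. \<sigma> i (x i j))"

end

theory Submission
  imports Defs
begin

lemma sum_fun_apply: "(\<Sum>x\<in>A. f x) y = (\<Sum>x\<in>A. f x y)"
  by (induction A rule: infinite_finite_induct) auto

lemma hmult_zero_right[simp]: "hmult H a 0 = 0"
  by (simp add: hmult_def fun_eq_iff)
lemma hmult_zero_left[simp]: "hmult H 0 a = 0"
  by (simp add: hmult_def fun_eq_iff)
lemma hmult_add_left: "hmult H (a + b) c = hmult H a c + hmult H b c"
  by (simp add: hmult_def fun_eq_iff algebra_simps sum.distrib)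
lemma hmult_add_right: "hmult H a (b + c) = hmult H a b + hmult H a c"
  by (simp add: hmult_def fun_eq_iff algebra_simps sum.distrib)
lemma hmult_uminus_right: "hmult H a (- b) = - hmult H a b"
  by (simp add: hmult_def fun_eq_iff sum_negf)

lemma sum_kron: "(\<Sum>i\<in>UNIV. (a::'b::finite \<Rightarrow> 'k::field) i * kron i l) = a l"
  by (simp add: kron_def if_distrib[where f="\<lambda>x. _ * x"] cong: if_cong)

lemma sw: "(\<Sum>x\<in>A. \<Sum>y\<in>B. f x y) = (\<Sum>y\<in>B. \<Sum>x\<in>A. f x y)" by (rule sum.swap)
lemma sum4_perm: "(\<Sum>l\<in>A. \<Sum>k\<in>B. \<Sum>i\<in>C. \<Sum>j\<in>D. (F i j k l::'a::comm_monoid_add)) = (\<Sum>i\<in>C. \<Sum>j\<in>D. \<Sum>k\<in>B. \<Sum>l\<in>A. F i j k l)"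
proof -
  have "(\<Sum>l\<in>A. \<Sum>k\<in>B. \<Sum>i\<in>C. \<Sum>j\<in>D. F i j k l) = (\<Sum>l\<in>A. \<Sum>i\<in>C. \<Sum>k\<in>B. \<Sum>j\<in>D. F i j k l)"
    by (rule sum.cong[OF refl], rule sw)
  also have "\<dots> = (\<Sum>i\<in>C. \<Sum>l\<in>A. \<Sum>k\<in>B. \<Sum>j\<in>D. F i j k l)" by (rule sw)
  also have "\<dots> = (\<Sum>i\<in>C. \<Sum>l\<in>A. \<Sum>j\<in>D. \<Sum>k\<in>B. F i j k l)"
    by (rule sum.cong[OF refl], rule sum.cong[OF refl], rule sw)
  also have "\<dots> = (\<Sum>i\<in>C. \<Sum>j\<in>D. \<Sum>l\<in>A. \<Sum>k\<in>B. F i j k l)"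
    by (rule sum.cong[OF refl], rule sw)
  also have "\<dots> = (\<Sum>i\<in>C. \<Sum>j\<in>D. \<Sum>k\<in>B. \<Sum>l\<in>A. F i j k l)"
    by (rule sum.cong[OF refl], rule sum.cong[OF refl], rule sw)
  finally show ?thesis .
qed

lemma sum3_perm: "(\<Sum>l\<in>A. \<Sum>j\<in>B. \<Sum>k\<in>C. (F j k l::'a::comm_monoid_add)) = (\<Sum>j\<in>B. \<Sum>k\<in>C. \<Sum>l\<in>A. F j k l)"
proof -
  have "(\<Sum>l\<in>A. \<Sum>j\<in>B. \<Sum>k\<in>C. F j k l) = (\<Sum>j\<in>B. \<Sum>l\<in>A. \<Sum>k\<in>C. F j k l)" by (rule sw)
  also have "\<dots> = (\<Sum>j\<in>B. \<Sum>k\<in>C. \<Sum>l\<in>A. F j k l)" by (rule sum.cong[OF refl], rule sw)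
  finally show ?thesis .
qed

context fixes H :: "('b::finite,'k::field) hopf" assumes H: "finite_group_scheme H"
begin

lemma hmult_unit_right: "hmult H a (un H) = a"
proof
  fix l
  have "hmult H a (un H) l = (\<Sum>i\<in>UNIV. a i * (\<Sum>j\<in>UNIV. un H j * mc H i j l))"
    by (simp add: hmult_def sum_distrib_left mult.assoc)
  also have "\<dots> = (\<Sum>i\<in>UNIV. a i * kron i l)"
    using H by (simp add: finite_group_scheme_def)
  finally show "hmult H a (un H) l = a l" by (simp add: sum_kron)
qed

lemma hmult_unit_left: "hmult H (un H) a = a"
proof
  fix l
  have "hmult H (un H) a l = (\<Sum>j\<in>UNIV. a j * (\<Sum>i\<in>UNIV. un H i * mc H i j l))"
    unfolding hmult_def by (subst sum.swap) (simp add: sum_distrib_left mult_ac)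
  also have "\<dots> = (\<Sum>j\<in>UNIV. a j * kron j l)"
    using H by (simp add: finite_group_scheme_def)
  finally show "hmult H (un H) a l = a l" by (simp add: sum_kron)
qed


lemma hmult_assoc: "hmult H (hmult H a b) c = hmult H a (hmult H b c)"
proof
  fix m
  have ax: "\<And>i j k. (\<Sum>l\<in>UNIV. mc H i j l * mc H l k m) = (\<Sum>l\<in>UNIV. mc H j k l * mc H i l m)"
    using H by (simp add: finite_group_scheme_def)
  have "hmult H (hmult H a b) c m = (\<Sum>l\<in>UNIV. \<Sum>k\<in>UNIV. \<Sum>i\<in>UNIV. \<Sum>j\<in>UNIV. a i * b j * c k * (mc H i j l * mc H l k m))"
    by (simp add: hmult_def sum_distrib_left sum_distrib_right mult_ac)
  also have "\<dots> = (\<Sum>i\<in>UNIV. \<Sum>j\<in>UNIV. \<Sum>k\<in>UNIV. \<Sum>l\<in>UNIV. a i * b j * c k * (mc H i j l * mc H l k m))"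
    by (rule sum4_perm)
  also have "\<dots> = (\<Sum>i\<in>UNIV. \<Sum>j\<in>UNIV. \<Sum>k\<in>UNIV. a i * b j * c k * (\<Sum>l\<in>UNIV. mc H i j l * mc H l k m))"
    by (simp add: sum_distrib_left)
  also have "\<dots> = (\<Sum>i\<in>UNIV. \<Sum>j\<in>UNIV. \<Sum>k\<in>UNIV. a i * b j * c k * (\<Sum>l\<in>UNIV. mc H j k l * mc H i l m))"
    by (simp add: ax)
  also have "\<dots> = (\<Sum>i\<in>UNIV. \<Sum>j\<in>UNIV. \<Sum>k\<in>UNIV. \<Sum>l\<in>UNIV. a i * b j * c k * (mc H j k l * mc H i l m))"
    by (simp add: sum_distrib_left)
  also have "\<dots> = (\<Sum>i\<in>UNIV. \<Sum>l\<in>UNIV. \<Sum>j\<in>UNIV. \<Sum>k\<in>UNIV. a i * b j * c k * (mc H j k l * mc H i l m))"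
    by (rule sum.cong[OF refl], rule sum3_perm[symmetric])
  also have "\<dots> = hmult H a (hmult H b c) m"
    by (simp add: hmult_def sum_distrib_left sum_distrib_right mult_ac)
  finally show "hmult H (hmult H a b) c m = hmult H a (hmult H b c) m" .
qed

end

context fixes H :: "('b::finite,'k::field) hopf" and S and M :: "('v::ab_group_add,'b,'k,'z) hmod_scheme"
  assumes M: "is_hmod H S M"
begin
lemma hm_zero: "0 \<in> car M" using M by (simp add: is_hmod_def)
lemma hm_add: "v \<in> car M \<Longrightarrow> w \<in> car M \<Longrightarrow> v + w \<in> car M" using M by (simp add: is_hmod_def)
lemma hm_neg: "v \<in> car M \<Longrightarrow> - v \<in> car M" using M by (simp add: is_hmod_def)
lemma hm_diff: "v \<in> car M \<Longrightarrow> w \<in> car M \<Longrightarrow> v - w \<in> car M"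
  using hm_add hm_neg by (metis diff_conv_add_uminus)
lemma hm_sum: "(\<And>x. x \<in> A \<Longrightarrow> f x \<in> car M) \<Longrightarrow> sum f A \<in> car M"
  by (induction A rule: infinite_finite_induct) (auto simp: hm_zero hm_add)
lemma hm_act: "a \<in> S \<Longrightarrow> v \<in> car M \<Longrightarrow> act M a v \<in> car M" using M by (simp add: is_hmod_def)
lemma hm_act_add: "a \<in> S \<Longrightarrow> v \<in> car M \<Longrightarrow> w \<in> car M \<Longrightarrow> act M a (v + w) = act M a v + act M a w"
  using M by (simp add: is_hmod_def)
lemma hm_add_act: "a \<in> S \<Longrightarrow> b \<in> S \<Longrightarrow> v \<in> car M \<Longrightarrow> act M (a + b) v = act M a v + act M b v"
  using M by (simp add: is_hmod_def)
lemma hm_mult_act: "a \<in> S \<Longrightarrow> b \<in> S \<Longrightarrow> v \<in> car M \<Longrightarrow> act M (hmult H a b) v = act M a (act M b v)"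
  using M by (simp add: is_hmod_def)
lemma hm_un_act: "v \<in> car M \<Longrightarrow> act M (un H) v = v"
  using M by (simp add: is_hmod_def)
lemma hm_act_0: "a \<in> S \<Longrightarrow> act M a 0 = 0"
proof -
  assume a: "a \<in> S"
  have "act M a (0 + 0) = act M a 0 + act M a 0" using hm_act_add[OF a] hm_zero by blast
  then show ?thesis by simp
qed
lemma hm_0_act: "0 \<in> S \<Longrightarrow> v \<in> car M \<Longrightarrow> act M 0 v = 0"
proof -
  assume a: "0 \<in> S" "v \<in> car M"
  have "act M (0 + 0) v = act M 0 v + act M 0 v" using hm_add_act a by blast
  then show ?thesis by simp
qed
lemma hm_act_neg: "a \<in> S \<Longrightarrow> v \<in> car M \<Longrightarrow> act M a (- v) = - act M a v"
proof -
  assume a: "a \<in> S" "v \<in> car M"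
  have "act M a (v + - v) = act M a v + act M a (- v)" using hm_act_add a hm_neg by blast
  then have "act M a v + act M a (- v) = 0" using hm_act_0 a by simp
  then show ?thesis by (metis minus_unique)
qed
lemma hm_act_diff: "a \<in> S \<Longrightarrow> v \<in> car M \<Longrightarrow> w \<in> car M \<Longrightarrow> act M a (v - w) = act M a v - act M a w"
proof -
  assume a: "a \<in> S" "v \<in> car M" "w \<in> car M"
  have "act M a (v + - w) = act M a v + act M a (- w)" using hm_act_add a hm_neg by blast
  also have "\<dots> = act M a v - act M a w" using hm_act_neg a by simp
  finally show ?thesis by simp
qed
lemma hm_act_sum: "a \<in> S \<Longrightarrow> (\<And>x. x \<in> A \<Longrightarrow> f x \<in> car M) \<Longrightarrow> act M a (sum f A) = (\<Sum>x\<in>A. act M a (f x))"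
  by (induction A rule: infinite_finite_induct) (auto simp: hm_act_0 hm_act_add hm_sum)
end

lemma hhom_zero: "is_hhom S M N f \<Longrightarrow> 0 \<in> car M \<Longrightarrow> f 0 = 0"
proof -
  assume h: "is_hhom S M N f" "0 \<in> car M"
  then have "f (0 + 0) = f 0 + f 0" unfolding is_hhom_def by blast
  then show ?thesis by simp
qed

context fixes H :: "('b::finite,'k::field) hopf" and S' and M :: "('v::ab_group_add,'b,'k,'z) hmod_scheme"
  and N :: "('w::ab_group_add,'b,'k,'z2) hmod_scheme" and f S
  assumes M: "is_hmod H S' M" and f: "is_hhom S M N f"
begin
lemma hh_car: "v \<in> car M \<Longrightarrow> f v \<in> car N" using f by (simp add: is_hhom_def)
lemma hh_add: "v \<in> car M \<Longrightarrow> w \<in> car M \<Longrightarrow> f (v + w) = f v + f w" using f by (simp add: is_hhom_def)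
lemma hh_act: "a \<in> S \<Longrightarrow> v \<in> car M \<Longrightarrow> f (act M a v) = act N a (f v)" using f by (simp add: is_hhom_def)
lemma hh_zero: "f 0 = 0" using hhom_zero[OF f hm_zero[OF M]] .
lemma hh_neg: "v \<in> car M \<Longrightarrow> f (- v) = - f v"
proof -
  assume v: "v \<in> car M"
  have "f (v + - v) = f v + f (- v)" using hh_add v hm_neg[OF M v] by blast
  then have "f v + f (- v) = 0" using hh_zero by simp
  then show ?thesis by (metis minus_unique)
qed
lemma hh_diff: "v \<in> car M \<Longrightarrow> w \<in> car M \<Longrightarrow> f (v - w) = f v - f w"
proof -
  assume a: "v \<in> car M" "w \<in> car M"
  have "f (v + - w) = f v + f (- w)" using hh_add a hm_neg[OF M] by blast
  also have "\<dots> = f v - f w" using hh_neg a by simp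
  finally show ?thesis by simp
qed
lemma hh_sum: "(\<And>x. x \<in> A \<Longrightarrow> g x \<in> car M) \<Longrightarrow> f (sum g A) = (\<Sum>x\<in>A. f (g x))"
  by (induction A rule: infinite_finite_induct) (auto simp: hh_zero hh_add hm_sum[OF M])
end

lemma hhom_comp: "is_hhom S M N f \<Longrightarrow> is_hhom S N P g \<Longrightarrow> is_hhom S M P (\<lambda>v. g (f v))"
  by (simp add: is_hhom_def)

lemma ghom_hhom: "is_ghom S M N f \<Longrightarrow> is_hhom S M N f" by (simp add: is_ghom_def)
lemma ghom_comp: "is_ghom S M N f \<Longrightarrow> is_ghom S N P g \<Longrightarrow> is_ghom S M P (\<lambda>v. g (f v))"
  by (simp add: is_ghom_def is_hhom_def)

lemma gmod_hmod: "is_gmod p H S M \<Longrightarrow> is_hmod H S M" by (simp add: is_gmod_def)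

context fixes p H S and M :: "('v::ab_group_add,'b::finite,'k::field) gmod"
  assumes M: "is_gmod p H S M"
begin
lemma gm_hmod: "is_hmod H S M" using M by (simp add: is_gmod_def)
lemma gm_z: "v \<in> car M \<Longrightarrow> zop M v \<in> car M" using M by (simp add: is_gmod_def)
lemma gm_z_add: "v \<in> car M \<Longrightarrow> w \<in> car M \<Longrightarrow> zop M (v + w) = zop M v + zop M w" using M by (simp add: is_gmod_def)
lemma gm_z_act: "a \<in> S \<Longrightarrow> v \<in> car M \<Longrightarrow> zop M (act M a v) = act M a (zop M v)" using M by (simp add: is_gmod_def)
lemma gm_zp: "v \<in> car M \<Longrightarrow> (zop M ^^ p) v = 0" using M by (simp add: is_gmod_def)
lemma gm_z_hhom: "is_hhom S M M (zop M)"
  using M by (simp add: is_gmod_def is_hhom_def)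
lemma gm_zpow: "v \<in> car M \<Longrightarrow> (zop M ^^ n) v \<in> car M"
  by (induction n) (auto simp: gm_z)
lemma gm_zpow_hhom: "is_hhom S M M (zop M ^^ n)"
proof (induction n)
  case 0 then show ?case by (simp add: is_hhom_def)
next
  case (Suc n) then show ?case using hhom_comp[OF Suc gm_z_hhom] by (simp add: comp_def)
qed
lemma gm_zpow_add: "v \<in> car M \<Longrightarrow> w \<in> car M \<Longrightarrow> (zop M ^^ n) (v + w) = (zop M ^^ n) v + (zop M ^^ n) w"
  using gm_zpow_hhom by (simp add: is_hhom_def)
lemma gm_zpow_act: "a \<in> S \<Longrightarrow> v \<in> car M \<Longrightarrow> (zop M ^^ n) (act M a v) = act M a ((zop M ^^ n) v)"
  using gm_zpow_hhom by (simp add: is_hhom_def)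
lemma gm_zpow_zero: "(zop M ^^ n) 0 = 0"
  using hh_zero[OF gm_hmod gm_zpow_hhom] .
lemma gm_zpow_sum: "(\<And>x. x \<in> A \<Longrightarrow> g x \<in> car M) \<Longrightarrow> (zop M ^^ n) (sum g A) = (\<Sum>x\<in>A. (zop M ^^ n) (g x))"
  using hh_sum[OF gm_hmod gm_zpow_hhom] .
lemma gm_zpow_diff: "v \<in> car M \<Longrightarrow> w \<in> car M \<Longrightarrow> (zop M ^^ n) (v - w) = (zop M ^^ n) v - (zop M ^^ n) w"
  using hh_diff[OF gm_hmod gm_zpow_hhom] .
lemma gm_zpow_ge: "p \<le> n \<Longrightarrow> v \<in> car M \<Longrightarrow> (zop M ^^ n) v = 0"
proof -
  assume "p \<le> n" "v \<in> car M"
  then obtain q where q: "n = q + p" by (metis le_add_diff_inverse2)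
  have "(zop M ^^ n) v = (zop M ^^ q) ((zop M ^^ p) v)" by (simp add: q funpow_add)
  then show ?thesis using gm_zp \<open>v \<in> car M\<close> gm_zpow_zero by simp
qed
end

lemma ghom_zpow: "is_ghom S M N f \<Longrightarrow> is_gmod p H S' M \<Longrightarrow> v \<in> car M \<Longrightarrow> f ((zop M ^^ n) v) = (zop N ^^ n) (f v)"
proof (induction n)
  case 0 then show ?case by simp
next
  case (Suc n)
  then show ?case using gm_zpow[OF Suc(3)] by (simp add: is_ghom_def)
qed

definition hext :: "('v::ab_group_add, 'b, 'k, 'z) hmod_scheme \<Rightarrow> ('x \<Rightarrow> 'v) \<Rightarrow> ('x \<Rightarrow> 'b \<Rightarrow> 'k::zero) \<Rightarrow> 'v" where
  "hext N \<phi> F = (\<Sum>x\<in>{x. F x \<noteq> 0}. act N (F x) (\<phi> x))"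

definition hbasis :: "('b, 'k::zero) hopf \<Rightarrow> 'x \<Rightarrow> 'x \<Rightarrow> 'b \<Rightarrow> 'k" where
  "hbasis H x = (\<lambda>y. if y = x then un H else 0)"

lemma hfree_car: "F \<in> car (hfree H X) \<longleftrightarrow> finite {v. F v \<noteq> 0} \<and> (\<forall>v. v \<notin> X \<longrightarrow> F v = 0)"
  by (simp add: hfree_def)
lemma hfree_act: "act (hfree H X) a F = (\<lambda>v. hmult H a (F v))"
  by (simp add: hfree_def)

lemma hbasis_car: "x \<in> X \<Longrightarrow> hbasis H x \<in> car (hfree H X)"
proof -
  assume "x \<in> X"
  have "{v. hbasis H x v \<noteq> 0} \<subseteq> {x}" by (auto simp: hbasis_def)
  then show ?thesis using \<open>x \<in> X\<close> finite_subset by (auto simp: hfree_car hbasis_def)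
qed

lemma hfree_supp_X: "F \<in> car (hfree H X) \<Longrightarrow> {v. F v \<noteq> 0} \<subseteq> X"
  by (auto simp: hfree_car)

context fixes H :: "('b::finite,'k::field) hopf" and N :: "('v::ab_group_add,'b,'k,'z) hmod_scheme"
  assumes N: "is_hmod H UNIV N"
begin

lemma hext_superset:
  assumes F: "F \<in> car (hfree H X)" and A: "finite A" "{x. F x \<noteq> 0} \<subseteq> A" and phi: "\<And>x. x \<in> A \<Longrightarrow> \<phi> x \<in> car N"
  shows "hext N \<phi> F = (\<Sum>x\<in>A. act N (F x) (\<phi> x))"
  unfolding hext_def
  by (rule sum.mono_neutral_left) (use A phi hm_0_act[OF N] in auto)

lemma hext_cong:
  assumes F: "F \<in> car (hfree H X)" and phi: "\<And>x. x \<in> X \<Longrightarrow> \<phi> x = \<psi> x"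
  shows "hext N \<phi> F = hext N \<psi> F"
  unfolding hext_def using hfree_supp_X[OF F] phi by (intro sum.cong) auto

lemma hext_hhom:
  assumes phi: "\<And>x. x \<in> X \<Longrightarrow> \<phi> x \<in> car N"
  shows "is_hhom UNIV (hfree H X) N (hext N \<phi>)"
  unfolding is_hhom_def
proof (intro conjI ballI)
  fix F assume F: "F \<in> car (hfree H X)"
  show "hext N \<phi> F \<in> car N" unfolding hext_def
    using hfree_supp_X[OF F] phi by (intro hm_sum[OF N] hm_act[OF N]) auto
next
  fix F G assume F: "F \<in> car (hfree H X)" and G: "G \<in> car (hfree H X)"
  let ?A = "{x. F x \<noteq> 0} \<union> {x. G x \<noteq> 0}"
  have fin: "finite ?A" using F G by (simp add: hfree_car)
  have AX: "?A \<subseteq> X" using hfree_supp_X[OF F] hfree_supp_X[OF G] by blast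
  have FG: "F + G \<in> car (hfree H X)" using F G
    by (auto simp: hfree_car intro: finite_subset[of _ ?A])
  have "hext N \<phi> (F + G) = (\<Sum>x\<in>?A. act N ((F + G) x) (\<phi> x))"
    by (rule hext_superset[OF FG fin]) (use AX phi in auto)
  also have "\<dots> = (\<Sum>x\<in>?A. act N (F x) (\<phi> x)) + (\<Sum>x\<in>?A. act N (G x) (\<phi> x))"
    unfolding sum.distrib[symmetric] by (rule sum.cong) (use AX phi hm_add_act[OF N] in auto)
  also have "\<dots> = hext N \<phi> F + hext N \<phi> G"
  proof -
    have ph: "\<And>x. x \<in> ?A \<Longrightarrow> \<phi> x \<in> car N" using AX phi by blast
    have "hext N \<phi> F = (\<Sum>x\<in>?A. act N (F x) (\<phi> x))" by (rule hext_superset[OF F fin _ ph]) auto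
    moreover have "hext N \<phi> G = (\<Sum>x\<in>?A. act N (G x) (\<phi> x))" by (rule hext_superset[OF G fin _ ph]) auto
    ultimately show ?thesis by simp
  qed
  finally show "hext N \<phi> (F + G) = hext N \<phi> F + hext N \<phi> G" .
next
  fix a F assume F: "F \<in> car (hfree H X)"
  let ?A = "{x. F x \<noteq> 0}"
  have fin: "finite ?A" using F by (simp add: hfree_car)
  have AX: "?A \<subseteq> X" using hfree_supp_X[OF F] .
  have aF: "act (hfree H X) a F \<in> car (hfree H X)" using F
    by (auto simp: hfree_car hfree_act intro: finite_subset[of _ ?A])
  have "hext N \<phi> (act (hfree H X) a F) = (\<Sum>x\<in>?A. act N (hmult H a (F x)) (\<phi> x))"
    by (subst hext_superset[OF aF fin]) (use AX phi in \<open>auto simp: hfree_act\<close>)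
  also have "\<dots> = (\<Sum>x\<in>?A. act N a (act N (F x) (\<phi> x)))"
    using AX phi by (auto simp: hm_mult_act[OF N] intro!: sum.cong)
  also have "\<dots> = act N a (hext N \<phi> F)"
    unfolding hext_def using AX phi by (subst hm_act_sum[OF N]) (auto intro: hm_act[OF N])
  finally show "hext N \<phi> (act (hfree H X) a F) = act N a (hext N \<phi> F)" .
qed

lemma hext_basis:
  assumes x: "x \<in> X" and phi: "\<phi> x \<in> car N"
  shows "hext N \<phi> (hbasis H x) = \<phi> x"
proof -
  have "hext N \<phi> (hbasis H x) = (\<Sum>y\<in>{x}. act N (hbasis H x y) (\<phi> y))"
    by (rule hext_superset[OF hbasis_car[OF x]]) (use phi in \<open>auto simp: hbasis_def\<close>)
  also have "\<dots> = \<phi> x" using hm_un_act[OF N phi] by (simp add: hbasis_def)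
  finally show ?thesis .
qed

end

context fixes H :: "('b::finite,'k::field) hopf" assumes H: "finite_group_scheme H"
begin

lemma hfree_hmod: "is_hmod H UNIV (hfree H X)"
  unfolding is_hmod_def
proof (intro conjI ballI)
  show "0 \<in> car (hfree H X)" by (simp add: hfree_car)
next
  fix F G assume F: "F \<in> car (hfree H X)" and G: "G \<in> car (hfree H X)"
  show "F + G \<in> car (hfree H X)" using F G
    by (auto simp: hfree_car intro: finite_subset[of _ "{x. F x \<noteq> 0} \<union> {x. G x \<noteq> 0}"])
  fix a show "act (hfree H X) a (F + G) = act (hfree H X) a F + act (hfree H X) a G"
    by (simp add: hfree_act hmult_add_right fun_eq_iff)
next
  fix F assume F: "F \<in> car (hfree H X)"
  show "- F \<in> car (hfree H X)" using F by (auto simp: hfree_car)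
  fix a show "act (hfree H X) a F \<in> car (hfree H X)" using F
    by (auto simp: hfree_car hfree_act intro: finite_subset[of _ "{x. F x \<noteq> 0}"])
  fix b
  show "act (hfree H X) (a + b) F = act (hfree H X) a F + act (hfree H X) b F"
    by (simp add: hfree_act hmult_add_left fun_eq_iff)
  show "act (hfree H X) (hmult H a b) F = act (hfree H X) a (act (hfree H X) b F)"
    by (simp add: hfree_act hmult_assoc[OF H])
next
  fix F show "act (hfree H X) (un H) F = F"
    by (simp add: hfree_act hmult_unit_left[OF H])
qed

lemma hfree_decomp:
  assumes F: "F \<in> car (hfree H X)"
  shows "F = (\<Sum>x\<in>{x. F x \<noteq> 0}. act (hfree H X) (F x) (hbasis H x))"
proof
  fix y
  have "(\<Sum>x\<in>{x. F x \<noteq> 0}. act (hfree H X) (F x) (hbasis H x)) y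
      = (\<Sum>x\<in>{x. F x \<noteq> 0}. if x = y then F x else 0)"
    unfolding sum_fun_apply[of _ _ y] by (intro sum.cong) (auto simp: hfree_act hbasis_def hmult_unit_right[OF H])
  also have "\<dots> = F y" using F by (simp add: hfree_car sum.delta')
  finally show "F y = (\<Sum>x\<in>{x. F x \<noteq> 0}. act (hfree H X) (F x) (hbasis H x)) y" by simp
qed

lemma hext_unique:
  assumes N: "is_hmod H UNIV N" and h: "is_hhom UNIV (hfree H X) N h" and F: "F \<in> car (hfree H X)"
  shows "h F = hext N (\<lambda>x. h (hbasis H x)) F"
proof -
  have X: "{x. F x \<noteq> 0} \<subseteq> X" using hfree_supp_X[OF F] .
  have "h F = h (\<Sum>x\<in>{x. F x \<noteq> 0}. act (hfree H X) (F x) (hbasis H x))"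
    using hfree_decomp[OF F] by simp
  also have "\<dots> = (\<Sum>x\<in>{x. F x \<noteq> 0}. h (act (hfree H X) (F x) (hbasis H x)))"
    using X by (intro hh_sum[OF hfree_hmod h]) (auto intro: hm_act[OF hfree_hmod] hbasis_car)
  also have "\<dots> = hext N (\<lambda>x. h (hbasis H x)) F"
    unfolding hext_def using X by (intro sum.cong) (auto simp: hh_act[OF hfree_hmod h] hbasis_car)
  finally show ?thesis .
qed

lemma hproj_lift:
  fixes P :: "('p::ab_group_add,'b,'k,'z) hmod_scheme" and A :: "('a::ab_group_add,'b,'k,'z1) hmod_scheme"
    and B :: "('c::ab_group_add,'b,'k,'z2) hmod_scheme"
  assumes P: "hproj H P" and A: "is_hmod H UNIV A" and B: "is_hmod H UNIV B"
    and g: "is_hhom UNIV A B g" and f: "is_hhom UNIV P B f" and im: "f ` car P \<subseteq> g ` car A"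
  shows "\<exists>f'. is_hhom UNIV P A f' \<and> (\<forall>v\<in>car P. g (f' v) = f v)"
proof -
  obtain i r where i: "is_hhom UNIV P (hfree H (car P)) i" and r: "is_hhom UNIV (hfree H (car P)) P r"
    and ri: "\<forall>v\<in>car P. r (i v) = v" using P by (auto simp: hproj_def)
  have Pm: "is_hmod H UNIV P" using P by (simp add: hproj_def)
  define c where "c x = (SOME a. a \<in> car A \<and> g a = f (r (hbasis H x)))" for x
  have c: "c x \<in> car A \<and> g (c x) = f (r (hbasis H x))" if x: "x \<in> car P" for x
  proof -
    have "r (hbasis H x) \<in> car P" using hh_car[OF hfree_hmod r] hbasis_car[OF x] .
    then have "f (r (hbasis H x)) \<in> g ` car A" using im by blast
    then obtain a where "a \<in> car A" "g a = f (r (hbasis H x))" by force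
    then have "a \<in> car A \<and> g a = f (r (hbasis H x))" by simp
    then show ?thesis unfolding c_def by (rule someI)
  qed
  have e: "is_hhom UNIV (hfree H (car P)) A (hext A c)" by (rule hext_hhom[OF A]) (simp add: c)
  have ge: "is_hhom UNIV (hfree H (car P)) B (\<lambda>F. g (hext A c F))" using hhom_comp[OF e g] .
  have fr: "is_hhom UNIV (hfree H (car P)) B (\<lambda>F. f (r F))" using hhom_comp[OF r f] .
  show ?thesis
  proof (intro exI conjI ballI)
    show "is_hhom UNIV P A (\<lambda>v. hext A c (i v))" using hhom_comp[OF i e] .
    fix v assume v: "v \<in> car P"
    have iv: "i v \<in> car (hfree H (car P))" using hh_car[OF Pm i v] .
    have "g (hext A c (i v)) = hext B (\<lambda>x. g (hext A c (hbasis H x))) (i v)"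
      using hext_unique[OF B ge iv] .
    also have "\<dots> = hext B (\<lambda>x. f (r (hbasis H x))) (i v)"
      by (rule hext_cong[OF B iv]) (simp add: hext_basis[OF A] c)
    also have "\<dots> = f (r (i v))" using hext_unique[OF B fr iv] by simp
    finally show "g (hext A c (i v)) = f v" using ri v by simp
  qed
qed

end

definition gext :: "nat \<Rightarrow> ('v::ab_group_add, 'b, 'k) gmod \<Rightarrow> ('x \<Rightarrow> 'v) \<Rightarrow> ('x \<Rightarrow> nat \<Rightarrow> 'b \<Rightarrow> 'k::zero) \<Rightarrow> 'v" where
  "gext p N \<phi> F = (\<Sum>x\<in>{x. \<exists>j. F x j \<noteq> 0}. \<Sum>j<p. (zop N ^^ j) (act N (F x j) (\<phi> x)))"

definition gbasis :: "('b, 'k::zero) hopf \<Rightarrow> 'x \<Rightarrow> 'x \<Rightarrow> nat \<Rightarrow> 'b \<Rightarrow> 'k" where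
  "gbasis H x = (\<lambda>v j. if v = x \<and> j = 0 then un H else 0)"

lemma gfree_car: "F \<in> car (gfree p H X) \<longleftrightarrow> finite {(v, j). F v j \<noteq> 0} \<and> (\<forall>v j. v \<notin> X \<or> p \<le> j \<longrightarrow> F v j = 0)"
  by (simp add: gfree_def)
lemma gfree_act: "act (gfree p H X) a F = (\<lambda>v j. hmult H a (F v j))"
  by (simp add: gfree_def)
lemma gfree_zop: "zop (gfree p H X) F = (\<lambda>v j. if j = 0 \<or> p \<le> j then 0 else F v (j - 1))"
  by (simp add: gfree_def)

lemma supp1_fin: "finite {(v, j). F v j \<noteq> 0} \<Longrightarrow> finite {x. \<exists>j. F x j \<noteq> 0}"
proof -
  assume "finite {(v, j). F v j \<noteq> 0}"
  moreover have "{x. \<exists>j. F x j \<noteq> 0} = fst ` {(v, j). F v j \<noteq> 0}" by force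
  ultimately show ?thesis by simp
qed

lemma gfree_supp1: "F \<in> car (gfree p H X) \<Longrightarrow> finite {x. \<exists>j. F x j \<noteq> 0} \<and> {x. \<exists>j. F x j \<noteq> 0} \<subseteq> X"
  by (auto simp: gfree_car supp1_fin)

lemma gbasis_car: "x \<in> X \<Longrightarrow> 0 < p \<Longrightarrow> gbasis H x \<in> car (gfree p H X)"
proof -
  assume "x \<in> X" "0 < p"
  have "{(v, j). gbasis H x v j \<noteq> 0} \<subseteq> {(x, 0)}" by (auto simp: gbasis_def)
  then have "finite {(v, j). gbasis H x v j \<noteq> 0}" by (rule finite_subset) simp
  then show ?thesis using \<open>x \<in> X\<close> \<open>0 < p\<close> unfolding gfree_car by (auto simp: gbasis_def)
qed

context fixes p :: nat and H :: "('b::finite,'k::field) hopf" and N :: "('v::ab_group_add,'b,'k) gmod"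
  assumes N: "is_gmod p H UNIV N"
begin

lemma N_hmod: "is_hmod H UNIV N" using gm_hmod[OF N] .

lemma gext_superset:
  assumes F: "F \<in> car (gfree p H X)" and A: "finite A" "{x. \<exists>j. F x j \<noteq> 0} \<subseteq> A" and phi: "\<And>x. x \<in> A \<Longrightarrow> \<phi> x \<in> car N"
  shows "gext p N \<phi> F = (\<Sum>x\<in>A. \<Sum>j<p. (zop N ^^ j) (act N (F x j) (\<phi> x)))"
  unfolding gext_def
  by (rule sum.mono_neutral_left) (use A phi hm_0_act[OF N_hmod] gm_zpow_zero[OF N] in auto)

lemma gext_cong:
  assumes F: "F \<in> car (gfree p H X)" and phi: "\<And>x. x \<in> X \<Longrightarrow> \<phi> x = \<psi> x"
  shows "gext p N \<phi> F = gext p N \<psi> F"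
  unfolding gext_def using gfree_supp1[OF F] phi by (intro sum.cong) auto

lemma gext_ghom:
  assumes phi: "\<And>x. x \<in> X \<Longrightarrow> \<phi> x \<in> car N" and p: "0 < p"
  shows "is_ghom UNIV (gfree p H X) N (gext p N \<phi>)"
  unfolding is_ghom_def is_hhom_def
proof (intro conjI ballI)
  fix F assume F: "F \<in> car (gfree p H X)"
  show "gext p N \<phi> F \<in> car N" unfolding gext_def
    using gfree_supp1[OF F] phi by (intro hm_sum[OF N_hmod] gm_zpow[OF N] hm_act[OF N_hmod]) auto
next
  fix F G assume F: "F \<in> car (gfree p H X)" and G: "G \<in> car (gfree p H X)"
  let ?A = "{x. \<exists>j. F x j \<noteq> 0} \<union> {x. \<exists>j. G x j \<noteq> 0}"
  have fin: "finite ?A" using gfree_supp1[OF F] gfree_supp1[OF G] by simp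
  have AX: "?A \<subseteq> X" using gfree_supp1[OF F] gfree_supp1[OF G] by blast
  have ph: "\<And>x. x \<in> ?A \<Longrightarrow> \<phi> x \<in> car N" using AX phi by blast
  have FG: "F + G \<in> car (gfree p H X)" using F G
    by (auto simp: gfree_car intro: finite_subset[of _ "{(v, j). F v j \<noteq> 0} \<union> {(v, j). G v j \<noteq> 0}"])
  have "gext p N \<phi> (F + G) = (\<Sum>x\<in>?A. \<Sum>j<p. (zop N ^^ j) (act N ((F + G) x j) (\<phi> x)))"
    by (rule gext_superset[OF FG fin _ ph]) auto
  also have "\<dots> = (\<Sum>x\<in>?A. \<Sum>j<p. (zop N ^^ j) (act N (F x j) (\<phi> x)) + (zop N ^^ j) (act N (G x j) (\<phi> x)))"
  proof (rule sum.cong[OF refl], rule sum.cong[OF refl])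
    fix x j assume x: "x \<in> ?A"
    have "act N ((F + G) x j) (\<phi> x) = act N (F x j) (\<phi> x) + act N (G x j) (\<phi> x)"
      using hm_add_act[OF N_hmod] ph[OF x] by simp
    then show "(zop N ^^ j) (act N ((F + G) x j) (\<phi> x)) = (zop N ^^ j) (act N (F x j) (\<phi> x)) + (zop N ^^ j) (act N (G x j) (\<phi> x))"
      using gm_zpow_add[OF N] hm_act[OF N_hmod] ph[OF x] by simp
  qed
  also have "\<dots> = (\<Sum>x\<in>?A. \<Sum>j<p. (zop N ^^ j) (act N (F x j) (\<phi> x))) + (\<Sum>x\<in>?A. \<Sum>j<p. (zop N ^^ j) (act N (G x j) (\<phi> x)))"
    by (simp add: sum.distrib)
  also have "\<dots> = gext p N \<phi> F + gext p N \<phi> G"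
  proof -
    have "gext p N \<phi> F = (\<Sum>x\<in>?A. \<Sum>j<p. (zop N ^^ j) (act N (F x j) (\<phi> x)))" by (rule gext_superset[OF F fin _ ph]) auto
    moreover have "gext p N \<phi> G = (\<Sum>x\<in>?A. \<Sum>j<p. (zop N ^^ j) (act N (G x j) (\<phi> x)))" by (rule gext_superset[OF G fin _ ph]) auto
    ultimately show ?thesis by simp
  qed
  finally show "gext p N \<phi> (F + G) = gext p N \<phi> F + gext p N \<phi> G" .
next
  fix a F assume F: "F \<in> car (gfree p H X)"
  let ?A = "{x. \<exists>j. F x j \<noteq> 0}"
  have fin: "finite ?A" and AX: "?A \<subseteq> X" using gfree_supp1[OF F] by auto
  have ph: "\<And>x. x \<in> ?A \<Longrightarrow> \<phi> x \<in> car N" using AX phi by blast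
  have aF: "act (gfree p H X) a F \<in> car (gfree p H X)" using F
    by (auto simp: gfree_car gfree_act intro: finite_subset[of _ "{(v, j). F v j \<noteq> 0}"])
  have "gext p N \<phi> (act (gfree p H X) a F) = (\<Sum>x\<in>?A. \<Sum>j<p. (zop N ^^ j) (act N (hmult H a (F x j)) (\<phi> x)))"
    by (subst gext_superset[OF aF fin _ ph]) (auto simp: gfree_act)
  also have "\<dots> = (\<Sum>x\<in>?A. \<Sum>j<p. act N a ((zop N ^^ j) (act N (F x j) (\<phi> x))))"
  proof (rule sum.cong[OF refl], rule sum.cong[OF refl])
    fix x j assume x: "x \<in> ?A"
    show "(zop N ^^ j) (act N (hmult H a (F x j)) (\<phi> x)) = act N a ((zop N ^^ j) (act N (F x j) (\<phi> x)))"
      using hm_mult_act[OF N_hmod] gm_zpow_act[OF N] hm_act[OF N_hmod] ph[OF x] by simp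
  qed
  also have "\<dots> = (\<Sum>x\<in>?A. act N a (\<Sum>j<p. (zop N ^^ j) (act N (F x j) (\<phi> x))))"
    by (rule sum.cong[OF refl], rule hm_act_sum[OF N_hmod, symmetric])
       (use ph in \<open>auto intro: gm_zpow[OF N] hm_act[OF N_hmod]\<close>)
  also have "\<dots> = act N a (gext p N \<phi> F)"
    unfolding gext_def
    by (rule hm_act_sum[OF N_hmod, symmetric]) (use ph in \<open>auto intro!: hm_sum[OF N_hmod] gm_zpow[OF N] hm_act[OF N_hmod]\<close>)
  finally show "gext p N \<phi> (act (gfree p H X) a F) = act N a (gext p N \<phi> F)" .
next
  fix F assume F: "F \<in> car (gfree p H X)"
  let ?A = "{x. \<exists>j. F x j \<noteq> 0}"
  have fin: "finite ?A" and AX: "?A \<subseteq> X" using gfree_supp1[OF F] by auto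
  have ph: "\<And>x. x \<in> ?A \<Longrightarrow> \<phi> x \<in> car N" using AX phi by blast
  obtain q where q: "p = Suc q" using p by (cases p) auto
  have zF: "zop (gfree p H X) F \<in> car (gfree p H X)" using F
    unfolding gfree_car gfree_zop
  proof (intro conjI allI impI)
    assume "finite {(v, j). F v j \<noteq> 0} \<and> (\<forall>v j. v \<notin> X \<or> p \<le> j \<longrightarrow> F v j = 0)"
    then have "finite ((\<lambda>(v, j). (v, Suc j)) ` {(v, j). F v j \<noteq> 0})" by blast
    moreover have "{(v, j). (if j = 0 \<or> p \<le> j then 0 else F v (j - 1)) \<noteq> 0} \<subseteq> (\<lambda>(v, j). (v, Suc j)) ` {(v, j). F v j \<noteq> 0}"
    proof
      fix z assume "z \<in> {(v, j). (if j = 0 \<or> p \<le> j then 0 else F v (j - 1)) \<noteq> 0}"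
      then obtain v j where "z = (v, j)" "j \<noteq> 0" "F v (j - 1) \<noteq> 0" by (auto split: if_splits)
      then show "z \<in> (\<lambda>(v, j). (v, Suc j)) ` {(v, j). F v j \<noteq> 0}"
        by (intro image_eqI[where x="(v, j - 1)"]) auto
    qed
    ultimately show "finite {(v, j). (if j = 0 \<or> p \<le> j then 0 else F v (j - 1)) \<noteq> 0}" by (rule finite_subset[rotated])
  next
    fix v j assume "finite {(v, j). F v j \<noteq> 0} \<and> (\<forall>v j. v \<notin> X \<or> p \<le> j \<longrightarrow> F v j = 0)" "v \<notin> X \<or> p \<le> j"
    then show "(if j = 0 \<or> p \<le> j then 0 else F v (j - 1)) = 0" by auto
  qed
  have "gext p N \<phi> (zop (gfree p H X) F) = (\<Sum>x\<in>?A. \<Sum>j<p. (zop N ^^ j) (act N (zop (gfree p H X) F x j) (\<phi> x)))"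
    by (rule gext_superset[OF zF fin _ ph]) (auto simp: gfree_zop split: if_splits)
  also have "\<dots> = (\<Sum>x\<in>?A. \<Sum>j<q. (zop N ^^ Suc j) (act N (F x j) (\<phi> x)))"
  proof (rule sum.cong[OF refl])
    fix x assume x: "x \<in> ?A"
    have "(\<Sum>j<p. (zop N ^^ j) (act N (zop (gfree p H X) F x j) (\<phi> x)))
        = (zop N ^^ 0) (act N (zop (gfree p H X) F x 0) (\<phi> x)) + (\<Sum>j<q. (zop N ^^ Suc j) (act N (zop (gfree p H X) F x (Suc j)) (\<phi> x)))"
      unfolding q by (rule sum.lessThan_Suc_shift)
    also have "\<dots> = (\<Sum>j<q. (zop N ^^ Suc j) (act N (F x j) (\<phi> x)))"
      using hm_0_act[OF N_hmod _ ph[OF x]] by (simp add: gfree_zop q)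
    finally show "(\<Sum>j<p. (zop N ^^ j) (act N (zop (gfree p H X) F x j) (\<phi> x))) = (\<Sum>j<q. (zop N ^^ Suc j) (act N (F x j) (\<phi> x)))" .
  qed
  also have "\<dots> = (\<Sum>x\<in>?A. \<Sum>j<p. (zop N ^^ Suc j) (act N (F x j) (\<phi> x)))"
  proof (rule sum.cong[OF refl])
    fix x assume x: "x \<in> ?A"
    have "(zop N ^^ Suc q) (act N (F x q) (\<phi> x)) = 0"
      using gm_zp[OF N] hm_act[OF N_hmod _ ph[OF x]] q by simp
    then show "(\<Sum>j<q. (zop N ^^ Suc j) (act N (F x j) (\<phi> x))) = (\<Sum>j<p. (zop N ^^ Suc j) (act N (F x j) (\<phi> x)))"
      unfolding q by simp
  qed
  also have "\<dots> = zop N (gext p N \<phi> F)"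
  proof -
    have "zop N (gext p N \<phi> F) = (\<Sum>x\<in>?A. zop N (\<Sum>j<p. (zop N ^^ j) (act N (F x j) (\<phi> x))))"
      unfolding gext_def
      by (rule hh_sum[OF N_hmod gm_z_hhom[OF N]]) (use ph in \<open>auto intro!: hm_sum[OF N_hmod] gm_zpow[OF N] hm_act[OF N_hmod]\<close>)
    also have "\<dots> = (\<Sum>x\<in>?A. \<Sum>j<p. zop N ((zop N ^^ j) (act N (F x j) (\<phi> x))))"
      by (rule sum.cong[OF refl], rule hh_sum[OF N_hmod gm_z_hhom[OF N]])
         (use ph in \<open>auto intro: gm_zpow[OF N] hm_act[OF N_hmod]\<close>)
    finally show ?thesis by simp
  qed
  finally show "gext p N \<phi> (zop (gfree p H X) F) = zop N (gext p N \<phi> F)" .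
qed

lemma gext_basis:
  assumes x: "x \<in> X" and phi: "\<phi> x \<in> car N" and p: "0 < p"
  shows "gext p N \<phi> (gbasis H x) = \<phi> x"
proof -
  have "gext p N \<phi> (gbasis H x) = (\<Sum>y\<in>{x}. \<Sum>j<p. (zop N ^^ j) (act N (gbasis H x y j) (\<phi> y)))"
    by (rule gext_superset[OF gbasis_car[OF x p]]) (use phi in \<open>auto simp: gbasis_def\<close>)
  also have "\<dots> = (\<Sum>j<p. (zop N ^^ j) (act N (gbasis H x x j) (\<phi> x)))" by simp
  also have "\<dots> = (\<Sum>j<p. if j = 0 then \<phi> x else 0)"
    using hm_un_act[OF N_hmod phi] hm_0_act[OF N_hmod _ phi] gm_zpow_zero[OF N]
    by (intro sum.cong) (auto simp: gbasis_def)
  also have "\<dots> = \<phi> x" using p by simp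
  finally show ?thesis .
qed

end

context fixes p :: nat and H :: "('b::finite,'k::field) hopf" assumes H: "finite_group_scheme H" and p: "0 < p"
begin

lemma gfree_zpow:
  assumes F: "F \<in> car (gfree p H X)"
  shows "(zop (gfree p H X) ^^ n) F = (\<lambda>v j. if n \<le> j \<and> j < p then F v (j - n) else 0)"
proof (induction n)
  case 0 then show ?case using F by (auto simp: gfree_car fun_eq_iff)
next
  case (Suc n) then show ?case by (auto simp: gfree_zop fun_eq_iff)
qed

lemma gfree_gmod: "is_gmod p H UNIV (gfree p H X)"
  unfolding is_gmod_def is_hmod_def
proof (intro conjI ballI)
  show "0 \<in> car (gfree p H X)" by (simp add: gfree_car)
next
  fix F G assume F: "F \<in> car (gfree p H X)" and G: "G \<in> car (gfree p H X)"
  show "F + G \<in> car (gfree p H X)" using F G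
    by (auto simp: gfree_car intro: finite_subset[of _ "{(v, j). F v j \<noteq> 0} \<union> {(v, j). G v j \<noteq> 0}"])
  fix a show "act (gfree p H X) a (F + G) = act (gfree p H X) a F + act (gfree p H X) a G"
    by (simp add: gfree_act hmult_add_right fun_eq_iff)
  show "zop (gfree p H X) (F + G) = zop (gfree p H X) F + zop (gfree p H X) G"
    by (simp add: gfree_zop fun_eq_iff)
next
  fix F assume F: "F \<in> car (gfree p H X)"
  show "- F \<in> car (gfree p H X)" using F by (auto simp: gfree_car)
  show "(zop (gfree p H X) ^^ p) F = 0"
  proof -
    have "(zop (gfree p H X) ^^ p) F = (\<lambda>v j. if p \<le> j \<and> j < p then F v (j - p) else 0)" by (rule gfree_zpow[OF F])
    also have "\<dots> = 0" by (intro ext) auto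
    finally show ?thesis .
  qed
  show "zop (gfree p H X) F \<in> car (gfree p H X)"
  proof -
    have "finite ((\<lambda>(v, j). (v, Suc j)) ` {(v, j). F v j \<noteq> 0})" using F by (simp add: gfree_car)
    moreover have "{(v, j). zop (gfree p H X) F v j \<noteq> 0} \<subseteq> (\<lambda>(v, j). (v, Suc j)) ` {(v, j). F v j \<noteq> 0}"
    proof
      fix z assume "z \<in> {(v, j). zop (gfree p H X) F v j \<noteq> 0}"
      then obtain v j where "z = (v, j)" "j \<noteq> 0" "F v (j - 1) \<noteq> 0" by (auto simp: gfree_zop split: if_splits)
      then show "z \<in> (\<lambda>(v, j). (v, Suc j)) ` {(v, j). F v j \<noteq> 0}"
        by (intro image_eqI[where x="(v, j - 1)"]) auto
    qed
    ultimately have "finite {(v, j). zop (gfree p H X) F v j \<noteq> 0}" by (rule finite_subset[rotated])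
    then show ?thesis using F by (auto simp: gfree_car gfree_zop)
  qed
  fix a show "act (gfree p H X) a F \<in> car (gfree p H X)" using F
    by (auto simp: gfree_car gfree_act intro: finite_subset[of _ "{(v, j). F v j \<noteq> 0}"])
  show "zop (gfree p H X) (act (gfree p H X) a F) = act (gfree p H X) a (zop (gfree p H X) F)"
    by (simp add: gfree_zop gfree_act fun_eq_iff)
  fix b
  show "act (gfree p H X) (a + b) F = act (gfree p H X) a F + act (gfree p H X) b F"
    by (simp add: gfree_act hmult_add_left fun_eq_iff)
  show "act (gfree p H X) (hmult H a b) F = act (gfree p H X) a (act (gfree p H X) b F)"
    by (simp add: gfree_act hmult_assoc[OF H])
next
  fix F show "act (gfree p H X) (un H) F = F"
    by (simp add: gfree_act hmult_unit_left[OF H])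
qed

lemma gfree_decomp:
  assumes F: "F \<in> car (gfree p H X)"
  shows "F = (\<Sum>x\<in>{x. \<exists>j. F x j \<noteq> 0}. \<Sum>j<p. (zop (gfree p H X) ^^ j) (act (gfree p H X) (F x j) (gbasis H x)))"
proof (rule ext, rule ext)
  fix v l
  let ?A = "{x. \<exists>j. F x j \<noteq> 0}"
  have X: "?A \<subseteq> X" using gfree_supp1[OF F] by blast
  have e: "(zop (gfree p H X) ^^ j) (act (gfree p H X) (F x j) (gbasis H x)) v l = (if x = v \<and> j = l \<and> j < p then F x j else 0)"
    if "x \<in> ?A" "j < p" for x j
  proof -
    have "act (gfree p H X) (F x j) (gbasis H x) \<in> car (gfree p H X)"
      by (rule hm_act[OF gm_hmod[OF gfree_gmod]]) (use X that p in \<open>auto intro!: gbasis_car\<close>)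
    then have "(zop (gfree p H X) ^^ j) (act (gfree p H X) (F x j) (gbasis H x)) v l
       = (if j \<le> l \<and> l < p then hmult H (F x j) (gbasis H x v (l - j)) else 0)"
      by (simp add: gfree_zpow gfree_act)
    also have "\<dots> = (if x = v \<and> j = l \<and> j < p then F x j else 0)"
      by (cases "x = v \<and> j = l \<and> j < p") (auto simp: gbasis_def hmult_unit_right[OF H])
    finally show ?thesis .
  qed
  have "(\<Sum>x\<in>?A. \<Sum>j<p. (zop (gfree p H X) ^^ j) (act (gfree p H X) (F x j) (gbasis H x))) v l
      = (\<Sum>x\<in>?A. \<Sum>j<p. (zop (gfree p H X) ^^ j) (act (gfree p H X) (F x j) (gbasis H x)) v l)"
    by (simp add: sum_fun_apply)
  also have "\<dots> = (\<Sum>x\<in>?A. \<Sum>j<p. if x = v \<and> j = l \<and> j < p then F x j else 0)"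
    using e by simp
  also have "\<dots> = (\<Sum>x\<in>?A. if x = v \<and> l < p then F x l else 0)"
  proof (rule sum.cong[OF refl])
    fix x
    show "(\<Sum>j<p. if x = v \<and> j = l \<and> j < p then F x j else 0) = (if x = v \<and> l < p then F x l else 0)"
    proof (cases "x = v \<and> l < p")
      case True
      then have "(\<Sum>j<p. if x = v \<and> j = l \<and> j < p then F x j else 0) = (\<Sum>j<p. if l = j then F x j else 0)"
        by (intro sum.cong) auto
      also have "\<dots> = F x l" using True by (simp add: sum.delta)
      finally show ?thesis using True by simp
    next
      case False
      have "(\<Sum>j<p. if x = v \<and> j = l \<and> j < p then F x j else 0) = 0"
        by (rule sum.neutral) (use False in auto)
      also have "0 = (if x = v \<and> l < p then F x l else 0)" using False by auto
      finally show ?thesis .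
    qed
  qed
  also have "\<dots> = F v l"
  proof (cases "F v l = 0")
    case True
    have "(\<Sum>x\<in>?A. if x = v \<and> l < p then F x l else 0) = 0"
      by (rule sum.neutral) (use True in auto)
    then show ?thesis using True by simp
  next
    case False
    then have "v \<in> ?A" "l < p" using F by (auto simp: gfree_car)
    moreover have "(\<Sum>x\<in>?A. if x = v \<and> l < p then F x l else 0) = (\<Sum>x\<in>?A. if v = x then F x l else 0)"
      using \<open>l < p\<close> by (intro sum.cong) auto
    ultimately show ?thesis using gfree_supp1[OF F] by (simp add: sum.delta)
  qed
  finally show "F v l = (\<Sum>x\<in>?A. \<Sum>j<p. (zop (gfree p H X) ^^ j) (act (gfree p H X) (F x j) (gbasis H x))) v l" by simp
qed

lemma gext_unique:
  assumes N: "is_gmod p H UNIV N" and h: "is_ghom UNIV (gfree p H X) N h" and F: "F \<in> car (gfree p H X)"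
  shows "h F = gext p N (\<lambda>x. h (gbasis H x)) F"
proof -
  let ?A = "{x. \<exists>j. F x j \<noteq> 0}"
  have X: "?A \<subseteq> X" using gfree_supp1[OF F] by blast
  have GM: "is_gmod p H UNIV (gfree p H X)" by (rule gfree_gmod)
  have hh: "is_hhom UNIV (gfree p H X) N h" using h by (simp add: is_ghom_def)
  have mem: "(zop (gfree p H X) ^^ j) (act (gfree p H X) (F x j) (gbasis H x)) \<in> car (gfree p H X)" if "x \<in> ?A" for x j
    by (rule gm_zpow[OF GM], rule hm_act[OF gm_hmod[OF GM]]) (use X that p in \<open>auto intro!: gbasis_car\<close>)
  have "h F = h (\<Sum>x\<in>?A. \<Sum>j<p. (zop (gfree p H X) ^^ j) (act (gfree p H X) (F x j) (gbasis H x)))"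
    by (rule arg_cong[OF gfree_decomp[OF F]])
  also have "\<dots> = (\<Sum>x\<in>?A. \<Sum>j<p. h ((zop (gfree p H X) ^^ j) (act (gfree p H X) (F x j) (gbasis H x))))"
  proof -
    have "h (\<Sum>x\<in>?A. \<Sum>j<p. (zop (gfree p H X) ^^ j) (act (gfree p H X) (F x j) (gbasis H x)))
        = (\<Sum>x\<in>?A. h (\<Sum>j<p. (zop (gfree p H X) ^^ j) (act (gfree p H X) (F x j) (gbasis H x))))"
      by (rule hh_sum[OF gm_hmod[OF GM] hh]) (rule hm_sum[OF gm_hmod[OF GM]], rule mem)
    also have "\<dots> = (\<Sum>x\<in>?A. \<Sum>j<p. h ((zop (gfree p H X) ^^ j) (act (gfree p H X) (F x j) (gbasis H x))))"
      by (rule sum.cong[OF refl], rule hh_sum[OF gm_hmod[OF GM] hh]) (rule mem)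
    finally show ?thesis .
  qed
  also have "\<dots> = gext p N (\<lambda>x. h (gbasis H x)) F"
    unfolding gext_def
  proof (rule sum.cong[OF refl], rule sum.cong[OF refl])
    fix x j assume x: "x \<in> ?A"
    have b: "gbasis H x \<in> car (gfree p H X)" using X x p by (auto intro!: gbasis_car)
    have "h ((zop (gfree p H X) ^^ j) (act (gfree p H X) (F x j) (gbasis H x))) = (zop N ^^ j) (h (act (gfree p H X) (F x j) (gbasis H x)))"
      by (rule ghom_zpow[OF h GM], rule hm_act[OF gm_hmod[OF GM] _ b]) simp
    also have "\<dots> = (zop N ^^ j) (act N (F x j) (h (gbasis H x)))"
      using hh_act[OF gm_hmod[OF GM] hh _ b] by simp
    finally show "h ((zop (gfree p H X) ^^ j) (act (gfree p H X) (F x j) (gbasis H x))) = (zop N ^^ j) (act N (F x j) (h (gbasis H x)))" .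
  qed
  finally show ?thesis .
qed

end

context fixes p :: nat and H :: "('b::finite,'k::field) hopf" assumes H: "finite_group_scheme H" and p: "0 < p"
begin

lemma ghom_id: "is_ghom S M M (\<lambda>v. v)" by (simp add: is_ghom_def is_hhom_def)

lemma factor_free:
  fixes N :: "('v::ab_group_add,'b,'k) gmod"
  assumes N: "is_gmod p H UNIV N" and b: "is_ghom UNIV (gfree p H X) N \<beta>"
  shows "\<exists>\<Phi>. is_ghom UNIV (gfree p H X) (gfree p H (car N)) \<Phi> \<and>
            (\<forall>F\<in>car (gfree p H X). gext p N (\<lambda>v. v) (\<Phi> F) = \<beta> F)"
proof -
  have GX: "is_gmod p H UNIV (gfree p H X)" by (rule gfree_gmod[OF H p])
  have GN: "is_gmod p H UNIV (gfree p H (car N))" by (rule gfree_gmod[OF H p])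
  have bb: "\<beta> (gbasis H x) \<in> car N" if "x \<in> X" for x
    using b gbasis_car[OF that p, of H] unfolding is_ghom_def is_hhom_def by blast
  define \<Phi> where "\<Phi> = gext p (gfree p H (car N)) (\<lambda>x. gbasis H (\<beta> (gbasis H x)))"
  have Phi: "is_ghom UNIV (gfree p H X) (gfree p H (car N)) \<Phi>"
    unfolding \<Phi>_def by (rule gext_ghom[OF GN _ p]) (simp add: gbasis_car[OF bb p])
  have rho: "is_ghom UNIV (gfree p H (car N)) N (gext p N (\<lambda>v. v))"
    by (rule gext_ghom[OF N _ p]) simp
  have comp: "is_ghom UNIV (gfree p H X) N (\<lambda>F. gext p N (\<lambda>v. v) (\<Phi> F))"
    by (rule ghom_comp[OF Phi rho])
  show ?thesis
  proof (intro exI conjI ballI)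
    show "is_ghom UNIV (gfree p H X) (gfree p H (car N)) \<Phi>" by (rule Phi)
    fix F assume F: "F \<in> car (gfree p H X)"
    have "gext p N (\<lambda>v. v) (\<Phi> F) = gext p N (\<lambda>x. gext p N (\<lambda>v. v) (\<Phi> (gbasis H x))) F"
      by (rule gext_unique[OF H p N comp F])
    also have "\<dots> = gext p N (\<lambda>x. \<beta> (gbasis H x)) F"
    proof (rule gext_cong[OF N F])
      fix x assume x: "x \<in> X"
      have "\<Phi> (gbasis H x) = gbasis H (\<beta> (gbasis H x))"
        unfolding \<Phi>_def by (rule gext_basis[OF GN x _ p]) (rule gbasis_car[OF bb[OF x] p])
      then show "gext p N (\<lambda>v. v) (\<Phi> (gbasis H x)) = \<beta> (gbasis H x)"
        using gext_basis[OF N bb[OF x] _ p] bb[OF x] by simp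
    qed
    also have "\<dots> = \<beta> F" by (rule gext_unique[OF H p N b F, symmetric])
    finally show "gext p N (\<lambda>v. v) (\<Phi> F) = \<beta> F" .
  qed
qed

lemma gproj_gfree: "gproj p H (gfree p H Y)"
proof -
  have G: "is_gmod p H UNIV (gfree p H Y)" by (rule gfree_gmod[OF H p])
  obtain \<Phi> where Phi: "is_ghom UNIV (gfree p H Y) (gfree p H (car (gfree p H Y))) \<Phi>"
    and e: "\<forall>F\<in>car (gfree p H Y). gext p (gfree p H Y) (\<lambda>v. v) (\<Phi> F) = F"
    using factor_free[OF G ghom_id] by blast
  have rho: "is_ghom UNIV (gfree p H (car (gfree p H Y))) (gfree p H Y) (gext p (gfree p H Y) (\<lambda>v. v))"
    by (rule gext_ghom[OF G _ p]) simp
  show ?thesis unfolding gproj_def using G Phi rho e by blast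
qed

lemma stably_zero_via:
  fixes M :: "('u::ab_group_add,'b,'k) gmod" and N :: "('v::ab_group_add,'b,'k) gmod"
  assumes N: "is_gmod p H UNIV N" and a: "is_ghom UNIV M (gfree p H X) \<alpha>" and b: "is_ghom UNIV (gfree p H X) N \<beta>"
    and f: "\<forall>v\<in>car M. f v = \<beta> (\<alpha> v)"
  shows "stably_zero p H M N f"
proof -
  obtain \<Phi> where Phi: "is_ghom UNIV (gfree p H X) (gfree p H (car N)) \<Phi>"
    and e: "\<forall>F\<in>car (gfree p H X). gext p N (\<lambda>v. v) (\<Phi> F) = \<beta> F"
    using factor_free[OF N b] by blast
  have rho: "is_ghom UNIV (gfree p H (car N)) N (gext p N (\<lambda>v. v))"
    by (rule gext_ghom[OF N _ p]) simp
  have aP: "is_ghom UNIV M (gfree p H (car N)) (\<lambda>v. \<Phi> (\<alpha> v))" by (rule ghom_comp[OF a Phi])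
  have eq: "\<forall>v\<in>car M. f v = gext p N (\<lambda>v. v) (\<Phi> (\<alpha> v))"
    using f e a by (simp add: is_ghom_def is_hhom_def)
  show ?thesis unfolding stably_zero_def
    using gproj_gfree aP rho eq by blast
qed

lemma gproj_via:
  fixes M :: "('u::ab_group_add,'b,'k) gmod"
  assumes M: "is_gmod p H UNIV M" and a: "is_ghom UNIV M (gfree p H X) \<alpha>" and b: "is_ghom UNIV (gfree p H X) M \<beta>"
    and f: "\<forall>v\<in>car M. \<beta> (\<alpha> v) = v"
  shows "gproj p H M"
proof -
  obtain \<Phi> where Phi: "is_ghom UNIV (gfree p H X) (gfree p H (car M)) \<Phi>"
    and e: "\<forall>F\<in>car (gfree p H X). gext p M (\<lambda>v. v) (\<Phi> F) = \<beta> F"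
    using factor_free[OF M b] by blast
  have rho: "is_ghom UNIV (gfree p H (car M)) M (gext p M (\<lambda>v. v))"
    by (rule gext_ghom[OF M _ p]) simp
  have aP: "is_ghom UNIV M (gfree p H (car M)) (\<lambda>v. \<Phi> (\<alpha> v))" by (rule ghom_comp[OF a Phi])
  have eq: "\<forall>v\<in>car M. gext p M (\<lambda>v. v) (\<Phi> (\<alpha> v)) = v"
    using f e a by (simp add: is_ghom_def is_hhom_def)
  show ?thesis unfolding gproj_def using M aP rho eq by blast
qed

end

lemma slice_car: "F \<in> car (gfree p H X) \<Longrightarrow> (\<lambda>x. F x l) \<in> car (hfree H X)"
proof -
  assume F: "F \<in> car (gfree p H X)"
  have "{x. F x l \<noteq> 0} \<subseteq> {x. \<exists>j. F x j \<noteq> 0}" by blast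
  then have "finite {x. F x l \<noteq> 0}" using gfree_supp1[OF F] finite_subset by blast
  then show ?thesis using F by (auto simp: hfree_car gfree_car)
qed

context fixes p :: nat and H :: "('b::finite,'k::field) hopf" assumes H: "finite_group_scheme H" and p: "0 < p"
begin

lemma coind_factor:
  fixes M :: "('u::ab_group_add,'b,'k) gmod" and N :: "('v::ab_group_add,'b,'k) gmod"
  assumes M: "is_gmod p H UNIV M" and N: "is_gmod p H UNIV N"
    and psi: "is_hhom UNIV M (hfree H X) \<psi>" and chi: "is_hhom UNIV (hfree H X) N \<chi>"
  shows "\<exists>\<alpha> \<beta>. is_ghom UNIV M (gfree p H X) \<alpha> \<and> is_ghom UNIV (gfree p H X) N \<beta> \<and>
     (\<forall>m\<in>car M. \<beta> (\<alpha> m) = (\<Sum>l<p. (zop N ^^ l) (\<chi> (\<psi> ((zop M ^^ (p - 1 - l)) m)))))"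
proof -
  have Mh: "is_hmod H UNIV M" using gm_hmod[OF M] .
  have Nh: "is_hmod H UNIV N" using gm_hmod[OF N] .
  have FH: "is_hmod H UNIV (hfree H X)" by (rule hfree_hmod[OF H])
  obtain q where q: "p = Suc q" using p by (cases p) auto
  define \<alpha> where "\<alpha> m = (\<lambda>x l. if l < p then \<psi> ((zop M ^^ (p - 1 - l)) m) x else 0)" for m
  define \<beta> where "\<beta> F = (\<Sum>l<p. (zop N ^^ l) (\<chi> (\<lambda>x. F x l)))" for F
  have psiZ: "\<psi> ((zop M ^^ n) m) \<in> car (hfree H X)" if "m \<in> car M" for n m
    using hh_car[OF Mh psi gm_zpow[OF M that]] .
  have a: "is_ghom UNIV M (gfree p H X) \<alpha>"
    unfolding is_ghom_def is_hhom_def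
  proof (intro conjI ballI)
    fix m assume m: "m \<in> car M"
    have "{(x, l). \<alpha> m x l \<noteq> 0} \<subseteq> (\<Union>l<p. {x. \<psi> ((zop M ^^ (p - 1 - l)) m) x \<noteq> 0} \<times> {l})"
      by (auto simp: \<alpha>_def split: if_splits)
    moreover have "finite (\<Union>l<p. {x. \<psi> ((zop M ^^ (p - 1 - l)) m) x \<noteq> 0} \<times> {l})"
      using psiZ[OF m] by (auto simp: hfree_car)
    ultimately have "finite {(x, l). \<alpha> m x l \<noteq> 0}" by (rule finite_subset)
    then show "\<alpha> m \<in> car (gfree p H X)"
      using psiZ[OF m] by (auto simp: gfree_car hfree_car \<alpha>_def)
  next
    fix m m' assume m: "m \<in> car M" and m': "m' \<in> car M"
    have e: "\<psi> ((zop M ^^ n) (m + m')) = \<psi> ((zop M ^^ n) m) + \<psi> ((zop M ^^ n) m')" for n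
      using gm_zpow_add[OF M m m'] hh_add[OF Mh psi gm_zpow[OF M m] gm_zpow[OF M m']] by simp
    show "\<alpha> (m + m') = \<alpha> m + \<alpha> m'"
      unfolding \<alpha>_def apply (rule ext, rule ext) subgoal for x l by (cases "l < p") (simp_all add: e) done

  next
    fix a m assume m: "m \<in> car M"
    have e: "\<psi> ((zop M ^^ n) (act M a m)) = (\<lambda>x. hmult H a (\<psi> ((zop M ^^ n) m) x))" for n
      using gm_zpow_act[OF M _ m] hh_act[OF Mh psi _ gm_zpow[OF M m]] by (simp add: hfree_act)
    show "\<alpha> (act M a m) = act (gfree p H X) a (\<alpha> m)"
      unfolding \<alpha>_def gfree_act by (rule ext, rule ext) (simp add: e)
  next
    fix m assume m: "m \<in> car M"
    show "\<alpha> (zop M m) = zop (gfree p H X) (\<alpha> m)"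
    proof (rule ext, rule ext)
      fix x l
      show "\<alpha> (zop M m) x l = zop (gfree p H X) (\<alpha> m) x l"
      proof (cases "l < p")
        case True
        have e: "(zop M ^^ (p - 1 - l)) (zop M m) = (zop M ^^ (p - l)) m"
        proof -
          have "p - l = Suc (q - l)" "p - 1 - l = q - l" using True q by auto
          then show ?thesis by (simp only: funpow_Suc_right o_apply)
        qed
        show ?thesis
        proof (cases "l = 0")
          case True
          have "(zop M ^^ p) m = 0" using gm_zp[OF M m] .
          then show ?thesis using e True p hh_zero[OF Mh psi] by (simp add: \<alpha>_def gfree_zop)
        next
          case False
          have "p - 1 - (l - 1) = p - l" "l - 1 < p" using \<open>l < p\<close> False by auto
          then show ?thesis using e False \<open>l < p\<close> by (simp add: \<alpha>_def gfree_zop)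
        qed
      next
        case False then show ?thesis by (simp add: \<alpha>_def gfree_zop)
      qed
    qed
  qed
  have sl: "(\<lambda>x. F x l) \<in> car (hfree H X)" if "F \<in> car (gfree p H X)" for F l
    by (rule slice_car[OF that])
  have chs: "\<chi> (\<lambda>x. F x l) \<in> car N" if "F \<in> car (gfree p H X)" for F l
    by (rule hh_car[OF FH chi sl[OF that]])
  have b: "is_ghom UNIV (gfree p H X) N \<beta>"
    unfolding is_ghom_def is_hhom_def
  proof (intro conjI ballI)
    fix F assume F: "F \<in> car (gfree p H X)"
    show "\<beta> F \<in> car N" unfolding \<beta>_def
      by (rule hm_sum[OF Nh], rule gm_zpow[OF N], rule chs[OF F])
  next
    fix F G assume F: "F \<in> car (gfree p H X)" and G: "G \<in> car (gfree p H X)"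
    have "\<And>l. \<chi> (\<lambda>x. (F + G) x l) = \<chi> (\<lambda>x. F x l) + \<chi> (\<lambda>x. G x l)"
    proof -
      fix l
      have "(\<lambda>x. (F + G) x l) = (\<lambda>x. F x l) + (\<lambda>x. G x l)" by (simp add: fun_eq_iff)
      then show "\<chi> (\<lambda>x. (F + G) x l) = \<chi> (\<lambda>x. F x l) + \<chi> (\<lambda>x. G x l)"
        using hh_add[OF FH chi sl[OF F] sl[OF G]] by simp
    qed
    then show "\<beta> (F + G) = \<beta> F + \<beta> G" unfolding \<beta>_def
      using gm_zpow_add[OF N chs[OF F] chs[OF G]] by (simp add: sum.distrib)
  next
    fix a F assume F: "F \<in> car (gfree p H X)"
    have "\<And>l. (zop N ^^ l) (\<chi> (\<lambda>x. act (gfree p H X) a F x l)) = act N a ((zop N ^^ l) (\<chi> (\<lambda>x. F x l)))"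
    proof -
      fix l
      have "(\<lambda>x. act (gfree p H X) a F x l) = act (hfree H X) a (\<lambda>x. F x l)" by (simp add: gfree_act hfree_act)
      then have "\<chi> (\<lambda>x. act (gfree p H X) a F x l) = act N a (\<chi> (\<lambda>x. F x l))"
        using hh_act[OF FH chi _ sl[OF F]] by simp
      then show "(zop N ^^ l) (\<chi> (\<lambda>x. act (gfree p H X) a F x l)) = act N a ((zop N ^^ l) (\<chi> (\<lambda>x. F x l)))"
        using gm_zpow_act[OF N _ chs[OF F]] by simp
    qed
    then have "\<beta> (act (gfree p H X) a F) = (\<Sum>l<p. act N a ((zop N ^^ l) (\<chi> (\<lambda>x. F x l))))"
      unfolding \<beta>_def by simp
    also have "\<dots> = act N a (\<beta> F)" unfolding \<beta>_def
      by (rule hm_act_sum[OF Nh, symmetric]) (simp_all add: gm_zpow[OF N] chs[OF F])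
    finally show "\<beta> (act (gfree p H X) a F) = act N a (\<beta> F)" .
  next
    fix F assume F: "F \<in> car (gfree p H X)"
    have z0: "(\<lambda>x. zop (gfree p H X) F x 0) = 0" by (simp add: gfree_zop fun_eq_iff)
    have zS: "(\<lambda>x. zop (gfree p H X) F x (Suc l)) = (\<lambda>x. F x l)" if "l < q" for l
      using that q by (simp add: gfree_zop fun_eq_iff)
    have "\<beta> (zop (gfree p H X) F) = (zop N ^^ 0) (\<chi> (\<lambda>x. zop (gfree p H X) F x 0))
          + (\<Sum>l<q. (zop N ^^ Suc l) (\<chi> (\<lambda>x. zop (gfree p H X) F x (Suc l))))"
      unfolding \<beta>_def q by (rule sum.lessThan_Suc_shift)
    also have "\<dots> = (\<Sum>l<q. (zop N ^^ Suc l) (\<chi> (\<lambda>x. F x l)))"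
      using z0 zS hh_zero[OF FH chi] by simp
    also have "\<dots> = (\<Sum>l<p. (zop N ^^ Suc l) (\<chi> (\<lambda>x. F x l)))"
      using gm_zp[OF N chs[OF F]] q by simp
    also have "\<dots> = (\<Sum>l<p. zop N ((zop N ^^ l) (\<chi> (\<lambda>x. F x l))))" by simp
    also have "\<dots> = zop N (\<beta> F)" unfolding \<beta>_def
      by (rule hh_sum[OF Nh gm_z_hhom[OF N], symmetric]) (simp add: gm_zpow[OF N] chs[OF F])
    finally show "\<beta> (zop (gfree p H X) F) = zop N (\<beta> F)" .
  qed
  have ba: "\<beta> (\<alpha> m) = (\<Sum>l<p. (zop N ^^ l) (\<chi> (\<psi> ((zop M ^^ (p - 1 - l)) m))))" if "m \<in> car M" for m
    unfolding \<beta>_def \<alpha>_def by (intro sum.cong) auto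
  show ?thesis using a b ba by blast
qed

end

lemma cx_deg_car[simp]: "car (cx_deg C i) = cc C i" by (simp add: cx_deg_def)
lemma cx_deg_act[simp]: "act (cx_deg C i) = cact C i" by (simp add: cx_deg_def)

context fixes H :: "('b::finite,'k::field) hopf" and S and C :: "('c::ab_group_add,'b,'k) cx"
  assumes C: "is_cx H S C"
begin
lemma cx_hmod: "is_hmod H S (cx_deg C i)" using C by (simp add: is_cx_def)
lemma cc_zero: "0 \<in> cc C i" using hm_zero[OF cx_hmod] by simp
lemma dd_hhom: "is_hhom S (cx_deg C (Suc i)) (cx_deg C i) (dd C (Suc i))" using C by (simp add: is_cx_def)
lemma dd_car: "x \<in> cc C (Suc i) \<Longrightarrow> dd C (Suc i) x \<in> cc C i" using hh_car[OF cx_hmod dd_hhom] by simp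
lemma dd_zero: "dd C (Suc i) 0 = 0" using hh_zero[OF cx_hmod dd_hhom] .
lemma dd_dd: "x \<in> cc C (Suc (Suc i)) \<Longrightarrow> dd C (Suc i) (dd C (Suc (Suc i)) x) = 0" using C by (simp add: is_cx_def)
end

definition Mvalid :: "nat \<Rightarrow> nat \<Rightarrow> nat \<Rightarrow> bool" where
  "Mvalid p i j \<longleftrightarrow> (if odd i then j < p - 1 else j = 0)"

lemma Mcar_iff: "x \<in> Mcar p C n \<longleftrightarrow> finite {(i, j). x i j \<noteq> 0} \<and>
   (\<forall>i j. if enat i < 2 * n \<and> Mvalid p i j then x i j \<in> cc C i else x i j = 0)"
  by (simp add: Mcar_def Mvalid_def)

lemma enat2inf[simp]: "(2::enat) * \<infinity> = \<infinity>" by (simp add: imult_is_infinity)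

lemma Mcar_infty: "x \<in> Mcar p C \<infinity> \<longleftrightarrow> finite {(i, j). x i j \<noteq> 0} \<and>
   (\<forall>i j. if Mvalid p i j then x i j \<in> cc C i else x i j = 0)"
  by (simp add: Mcar_iff)

lemma Mmod_car[simp]: "car (Mmod p C n) = Mcar p C n" by (simp add: Mmod_def)
lemma Mmod_act[simp]: "act (Mmod p C n) = (\<lambda>a x i j. cact C i a (x i j))" by (simp add: Mmod_def)
lemma Mmod_zop[simp]: "zop (Mmod p C n) = MZ p C" by (simp add: Mmod_def)

lemma Mcar_comp: "is_cx H S C \<Longrightarrow> x \<in> Mcar p C n \<Longrightarrow> x i j \<in> cc C i"
  using cc_zero unfolding Mcar_iff by metis

lemma Mcar_out: "x \<in> Mcar p C n \<Longrightarrow> \<not> Mvalid p i j \<Longrightarrow> x i j = 0"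
  unfolding Mcar_iff by metis

lemma Mcar_fin: "x \<in> Mcar p C n \<Longrightarrow> finite {(i, j). x i j \<noteq> 0}"
  unfolding Mcar_iff by metis

lemma part1:
  fixes C :: "('c::ab_group_add,'b::finite,'k::field) cx" and D :: "('d::ab_group_add,'b,'k) cx"
  assumes C: "is_cx H UNIV C" and D: "is_cx H UNIV D" and s: "is_chain_map UNIV C D \<sigma>"
  shows "is_ghom UNIV (Mmod p C n) (Mmod p D n) (Mmap \<sigma>)"
proof -
  have sh: "is_hhom UNIV (cx_deg C i) (cx_deg D i) (\<sigma> i)" for i using s by (simp add: is_chain_map_def)
  have s0: "\<sigma> i 0 = 0" for i using hh_zero[OF cx_hmod[OF C] sh] .
  have scar: "c \<in> cc C i \<Longrightarrow> \<sigma> i c \<in> cc D i" for c i using hh_car[OF cx_hmod[OF C] sh] by simp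
  have sadd: "c \<in> cc C i \<Longrightarrow> c' \<in> cc C i \<Longrightarrow> \<sigma> i (c + c') = \<sigma> i c + \<sigma> i c'" for c c' i
    using hh_add[OF cx_hmod[OF C] sh] by simp
  have sact: "c \<in> cc C i \<Longrightarrow> \<sigma> i (cact C i a c) = cact D i a (\<sigma> i c)" for c i a
    using hh_act[OF cx_hmod[OF C] sh] by simp
  have sd: "c \<in> cc C (Suc i) \<Longrightarrow> \<sigma> i (dd C (Suc i) c) = dd D (Suc i) (\<sigma> (Suc i) c)" for c i
    using s by (simp add: is_chain_map_def)
  show ?thesis unfolding is_ghom_def is_hhom_def
  proof (intro conjI ballI)
    fix x assume x: "x \<in> car (Mmod p C n)"
    then have x': "x \<in> Mcar p C n" by simp
    have "{(i, j). Mmap \<sigma> x i j \<noteq> 0} \<subseteq> {(i, j). x i j \<noteq> 0}" by (auto simp: Mmap_def s0)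
    then have "finite {(i, j). Mmap \<sigma> x i j \<noteq> 0}" using Mcar_fin[OF x'] finite_subset by blast
    moreover have "\<forall>i j. if enat i < 2 * n \<and> Mvalid p i j then Mmap \<sigma> x i j \<in> cc D i else Mmap \<sigma> x i j = 0"
      using x' unfolding Mcar_iff by (auto simp: Mmap_def s0 scar)
    ultimately show "Mmap \<sigma> x \<in> car (Mmod p D n)" by (simp add: Mcar_iff)
  next
    fix x y assume x: "x \<in> car (Mmod p C n)" and y: "y \<in> car (Mmod p C n)"
    show "Mmap \<sigma> (x + y) = Mmap \<sigma> x + Mmap \<sigma> y"
      using Mcar_comp[OF C, of x] Mcar_comp[OF C, of y] x y by (simp add: Mmap_def fun_eq_iff sadd)
  next
    fix a x assume x: "x \<in> car (Mmod p C n)"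
    show "Mmap \<sigma> (act (Mmod p C n) a x) = act (Mmod p D n) a (Mmap \<sigma> x)"
      using Mcar_comp[OF C, of x] x by (simp add: Mmap_def fun_eq_iff sact)
  next
    fix x assume x: "x \<in> car (Mmod p C n)"
    have xc: "\<And>i j. x i j \<in> cc C i" using Mcar_comp[OF C, of x] x by simp
    show "Mmap \<sigma> (zop (Mmod p C n) x) = zop (Mmod p D n) (Mmap \<sigma> x)"
      by (simp add: Mmap_def fun_eq_iff MZ_def sd xc s0)
  qed
qed

lemma part2:
  fixes C :: "('c::ab_group_add,'b::finite,'k::field) cx" and D :: "('d::ab_group_add,'b,'k) cx"
  assumes C: "is_cx H UNIV C" and D: "is_cx H UNIV D"
  shows "\<exists>f. is_giso UNIV (Mmod p (cx_sum C D) n) (gsum (Mmod p C n) (Mmod p D n)) f"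
proof -
  define f :: "(nat \<Rightarrow> nat \<Rightarrow> 'c \<times> 'd) \<Rightarrow> (nat \<Rightarrow> nat \<Rightarrow> 'c) \<times> (nat \<Rightarrow> nat \<Rightarrow> 'd)"
    where "f x = ((\<lambda>i j. fst (x i j)), (\<lambda>i j. snd (x i j)))" for x
  have cc_sum: "cc (cx_sum C D) i = cc C i \<times> cc D i" for i by (simp add: cx_sum_def)
  have carf0: "x \<in> Mcar p (cx_sum C D) n \<longleftrightarrow> (\<lambda>i j. fst (x i j)) \<in> Mcar p C n \<and> (\<lambda>i j. snd (x i j)) \<in> Mcar p D n" for x
  proof -
    have supp: "{(i, j). x i j \<noteq> 0} = {(i, j). fst (x i j) \<noteq> 0} \<union> {(i, j). snd (x i j) \<noteq> 0}"
      by (auto simp: prod_eq_iff)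
    show ?thesis unfolding Mcar_iff cc_sum supp
      by (auto simp: prod_eq_iff mem_Times_iff split: if_splits)
  qed
  have carf: "x \<in> Mcar p (cx_sum C D) n \<longleftrightarrow> f x \<in> Mcar p C n \<times> Mcar p D n" for x
    using carf0 by (simp add: f_def)
  show ?thesis
  proof (intro exI)
    show "is_giso UNIV (Mmod p (cx_sum C D) n) (gsum (Mmod p C n) (Mmod p D n)) f"
      unfolding is_giso_def is_ghom_def is_hhom_def
    proof (intro conjI ballI)
      fix x assume "x \<in> car (Mmod p (cx_sum C D) n)"
      then show "f x \<in> car (gsum (Mmod p C n) (Mmod p D n))" using carf by (simp add: gsum_def)
    next
      fix x y :: "nat \<Rightarrow> nat \<Rightarrow> 'c \<times> 'd"
      show "f (x + y) = f x + f y" by (simp add: f_def fun_eq_iff)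
    next
      fix a and x :: "nat \<Rightarrow> nat \<Rightarrow> 'c \<times> 'd"
      show "f (act (Mmod p (cx_sum C D) n) a x) = act (gsum (Mmod p C n) (Mmod p D n)) a (f x)"
        by (simp add: f_def fun_eq_iff gsum_def cx_sum_def split_beta)
    next
      fix x :: "nat \<Rightarrow> nat \<Rightarrow> 'c \<times> 'd"
      show "f (zop (Mmod p (cx_sum C D) n) x) = zop (gsum (Mmod p C n) (Mmod p D n)) (f x)"
        by (simp add: f_def fun_eq_iff gsum_def cx_sum_def split_beta MZ_def)
    next
      show "bij_betw f (car (Mmod p (cx_sum C D) n)) (car (gsum (Mmod p C n) (Mmod p D n)))"
        unfolding bij_betw_def
      proof
        show "inj_on f (car (Mmod p (cx_sum C D) n))"
          by (rule inj_onI) (auto simp: f_def fun_eq_iff prod_eq_iff)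
        show "f ` car (Mmod p (cx_sum C D) n) = car (gsum (Mmod p C n) (Mmod p D n))"
        proof
          show "f ` car (Mmod p (cx_sum C D) n) \<subseteq> car (gsum (Mmod p C n) (Mmod p D n))"
            using carf by (auto simp: gsum_def)
          show "car (gsum (Mmod p C n) (Mmod p D n)) \<subseteq> f ` car (Mmod p (cx_sum C D) n)"
          proof
            fix z assume z: "z \<in> car (gsum (Mmod p C n) (Mmod p D n))"
            obtain u v where uv: "z = (u, v)" by (cases z)
            define x where "x = (\<lambda>i j. (u i j, v i j))"
            have fx: "f x = z" by (simp add: f_def x_def uv)
            then have "x \<in> Mcar p (cx_sum C D) n" using carf z by (simp add: gsum_def)
            then show "z \<in> f ` car (Mmod p (cx_sum C D) n)" using fx by force
          qed
        qed
      qed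
    qed
  qed
qed

lemma part3:
  fixes C :: "('c::ab_group_add,'b::finite,'k::field) cx"
  shows "\<exists>f. is_giso J (gres J (Mmod p C n)) (Mmod p (cx_res J C) n) f"
proof -
  have car: "car (gres J (Mmod p C n)) = car (Mmod p (cx_res J C) n)"
    by (simp add: gres_def Mmod_def Mcar_def cx_res_def)
  have z: "MZ p (cx_res J C) = MZ p C" by (simp add: MZ_def cx_res_def fun_eq_iff)
  show ?thesis
  proof (intro exI)
    show "is_giso J (gres J (Mmod p C n)) (Mmod p (cx_res J C) n) (\<lambda>x. x)"
      unfolding is_giso_def is_ghom_def is_hhom_def
      using car z bij_betw_id[unfolded id_def] by (auto simp: gres_def cx_res_def fun_eq_iff)
  qed
qed

definition ZF :: "nat \<Rightarrow> ('c::ab_group_add, 'b, 'k) cx \<Rightarrow> nat \<Rightarrow> (nat \<Rightarrow> nat \<Rightarrow> 'c) \<Rightarrow> nat \<Rightarrow> nat \<Rightarrow> 'c" where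
  "ZF p C l x i j =
    (if odd i then (if j < p - 1 then (if l \<le> j then x i (j - l) else if l = Suc j then dd C (Suc i) (x (Suc i) 0) else 0) else 0)
     else (if j = 0 then (if l = 0 then x i 0 else dd C (Suc i) (x (Suc i) (p - 1 - l))) else 0))"

context fixes H :: "('b::finite,'k::field) hopf" and S and C :: "('c::ab_group_add,'b,'k) cx" and p :: nat
  assumes C: "is_cx H S C" and p2: "2 \<le> p"
begin

lemma ZF_0: "x \<in> Mcar p C n \<Longrightarrow> ZF p C 0 x = x"
proof (rule ext, rule ext)
  fix i j assume x: "x \<in> Mcar p C n"
  show "ZF p C 0 x i j = x i j"
    using Mcar_out[OF x, of i j] by (auto simp: ZF_def Mvalid_def)
qed

lemma ZF_step:
  assumes x: "x \<in> Mcar p C n" and l: "Suc l < p"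
  shows "MZ p C (ZF p C l x) = ZF p C (Suc l) x"
proof (rule ext, rule ext)
  fix i j
  have xc: "\<And>i j. x i j \<in> cc C i" using Mcar_comp[OF C x] .
  have ddd: "\<And>i k. dd C (Suc i) (dd C (Suc (Suc i)) (x (Suc (Suc i)) k)) = 0" using dd_dd[OF C] xc by blast
  show "MZ p C (ZF p C l x) i j = ZF p C (Suc l) x i j"
  proof (cases "odd i")
    case True
    show ?thesis
    proof (cases "j = 0")
      case True
      then show ?thesis using \<open>odd i\<close> p2 l ddd by (auto simp: MZ_def ZF_def dd_zero[OF C])
    next
      case False
      then show ?thesis using \<open>odd i\<close> p2 l by (auto simp: MZ_def ZF_def)
    qed
  next
    case False
    then show ?thesis using p2 l by (auto simp: MZ_def ZF_def)
  qed
qed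

lemma Zpow_closed: "x \<in> Mcar p C n \<Longrightarrow> l < p \<Longrightarrow> (MZ p C ^^ l) x = ZF p C l x"
proof (induction l)
  case 0 then show ?case using ZF_0 by simp
next
  case (Suc l) then show ?case using ZF_step by simp
qed

lemma Zpow_p: "x \<in> Mcar p C n \<Longrightarrow> (MZ p C ^^ p) x = 0"
proof -
  assume x: "x \<in> Mcar p C n"
  have xc: "\<And>i j. x i j \<in> cc C i" using Mcar_comp[OF C x] .
  have ddd: "\<And>i k. dd C (Suc i) (dd C (Suc (Suc i)) (x (Suc (Suc i)) k)) = 0" using dd_dd[OF C] xc by blast
  obtain q where q: "p = Suc q" using p2 by (cases p) auto
  have "(MZ p C ^^ p) x = MZ p C (ZF p C q x)" using Zpow_closed[OF x, of q] q by simp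
  also have "\<dots> = 0"
  proof (rule ext, rule ext)
    fix i j show "MZ p C (ZF p C q x) i j = 0 i j"
      using p2 q ddd by (auto simp: MZ_def ZF_def)
  qed
  finally show ?thesis .
qed

end

lemma Mcar_infI:
  assumes "finite {(i, j). y i j \<noteq> 0}" "\<And>i j. Mvalid p i j \<Longrightarrow> y i j \<in> cc C i" "\<And>i j. \<not> Mvalid p i j \<Longrightarrow> y i j = 0"
  shows "y \<in> Mcar p C \<infinity>"
  using assms unfolding Mcar_infty by auto

lemma supp_sub_fin: "finite {(i, j). x i j \<noteq> 0} \<Longrightarrow> (\<And>i j. y i j \<noteq> 0 \<Longrightarrow> (i, j) \<in> (f ` {(i, j). x i j \<noteq> 0}) \<union> (g ` {(i, j). x i j \<noteq> 0}))
  \<Longrightarrow> finite {(i, j). y i j \<noteq> 0}"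
  by (rule finite_subset[of _ "(f ` {(i, j). x i j \<noteq> 0}) \<union> (g ` {(i, j). x i j \<noteq> 0})"]) auto

lemma Mmod_gmod:
  fixes C :: "('c::ab_group_add,'b::finite,'k::field) cx"
  assumes C: "is_cx H UNIV C" and p2: "2 \<le> p"
  shows "is_gmod p H UNIV (Mmod p C \<infinity>)"
proof -
  have hm: "is_hmod H UNIV (cx_deg C i)" for i by (rule cx_hmod[OF C])
  have xc: "x \<in> Mcar p C \<infinity> \<Longrightarrow> x i j \<in> cc C i" for x i j by (rule Mcar_comp[OF C])
  show ?thesis unfolding is_gmod_def is_hmod_def Mmod_car Mmod_act Mmod_zop
  proof (intro conjI ballI)
    show "0 \<in> Mcar p C \<infinity>" by (rule Mcar_infI) (auto simp: cc_zero[OF C])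
  next
    fix x y assume x: "x \<in> Mcar p C \<infinity>" and y: "y \<in> Mcar p C \<infinity>"
    show "x + y \<in> Mcar p C \<infinity>"
    proof (rule Mcar_infI)
      show "finite {(i, j). (x + y) i j \<noteq> 0}"
        by (rule finite_subset[of _ "{(i, j). x i j \<noteq> 0} \<union> {(i, j). y i j \<noteq> 0}"]) (auto simp: Mcar_fin[OF x] Mcar_fin[OF y])
      show "\<And>i j. Mvalid p i j \<Longrightarrow> (x + y) i j \<in> cc C i" using hm_add[OF hm] xc x y by simp
      show "\<And>i j. \<not> Mvalid p i j \<Longrightarrow> (x + y) i j = 0" using Mcar_out[OF x] Mcar_out[OF y] by simp
    qed
    fix a
    show "(\<lambda>i j. cact C i a ((x + y) i j)) = (\<lambda>i j. cact C i a (x i j)) + (\<lambda>i j. cact C i a (y i j))"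
      using hm_act_add[OF hm] xc x y by (simp add: fun_eq_iff)
    show "MZ p C (x + y) = MZ p C x + MZ p C y"
      using hh_add[OF hm dd_hhom[OF C]] xc x y by (simp add: fun_eq_iff MZ_def)
  next
    fix x assume x: "x \<in> Mcar p C \<infinity>"
    have x0: "\<not> Mvalid p i j \<Longrightarrow> x i j = 0" for i j by (rule Mcar_out[OF x])
    show "- x \<in> Mcar p C \<infinity>"
    proof (rule Mcar_infI)
      show "finite {(i, j). (- x) i j \<noteq> 0}" using Mcar_fin[OF x] by simp
      show "\<And>i j. Mvalid p i j \<Longrightarrow> (- x) i j \<in> cc C i" using hm_neg[OF hm] xc x by simp
      show "\<And>i j. \<not> Mvalid p i j \<Longrightarrow> (- x) i j = 0" using x0 by simp
    qed
    show "MZ p C x \<in> Mcar p C \<infinity>"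
    proof (rule Mcar_infI)
      show "finite {(i, j). MZ p C x i j \<noteq> 0}"
      proof (rule supp_sub_fin[OF Mcar_fin[OF x], of _ "\<lambda>(a, b). (a - 1, 0)" "\<lambda>(a, b). (a, Suc b)"])
        fix i j assume ne: "MZ p C x i j \<noteq> 0"
        show "(i, j) \<in> (\<lambda>(a, b). (a - 1, 0)) ` {(i, j). x i j \<noteq> 0} \<union> (\<lambda>(a, b). (a, Suc b)) ` {(i, j). x i j \<noteq> 0}"
        proof (cases "odd i")
          case True
          show ?thesis
          proof (cases "j = 0")
            case True
            then have "x (Suc i) 0 \<noteq> 0" using ne \<open>odd i\<close> dd_zero[OF C] by (auto simp: MZ_def)
            then show ?thesis using True by (intro UnI1 image_eqI[where x="(Suc i, 0)"]) auto
          next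
            case False
            then have "x i (j - 1) \<noteq> 0" using ne \<open>odd i\<close> by (auto simp: MZ_def split: if_splits)
            then show ?thesis using False by (intro UnI2 image_eqI[where x="(i, j - 1)"]) auto
          qed
        next
          case False
          then have "j = 0" "x (Suc i) (p - 2) \<noteq> 0" using ne dd_zero[OF C] by (auto simp: MZ_def split: if_splits)
          then show ?thesis by (intro UnI1 image_eqI[where x="(Suc i, p - 2)"]) auto
        qed
      qed
      show "\<And>i j. Mvalid p i j \<Longrightarrow> MZ p C x i j \<in> cc C i"
        using dd_car[OF C] xc[OF x] p2 by (auto simp: MZ_def Mvalid_def)
      show "\<And>i j. \<not> Mvalid p i j \<Longrightarrow> MZ p C x i j = 0"
        using p2 by (auto simp: MZ_def Mvalid_def)
    qed
    show "(MZ p C ^^ p) x = 0" by (rule Zpow_p[OF C p2 x])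
    show "(\<lambda>i j. cact C i (un H) (x i j)) = x"
      using hm_un_act[OF hm] xc x by (simp add: fun_eq_iff)
    fix a
    show "(\<lambda>i j. cact C i a (x i j)) \<in> Mcar p C \<infinity>"
    proof (rule Mcar_infI)
      show "finite {(i, j). cact C i a (x i j) \<noteq> 0}"
        by (rule finite_subset[of _ "{(i, j). x i j \<noteq> 0}"]) (auto simp: Mcar_fin[OF x] hm_act_0[OF hm, simplified])
      show "\<And>i j. Mvalid p i j \<Longrightarrow> cact C i a (x i j) \<in> cc C i" using hm_act[OF hm] xc x by simp
      show "\<And>i j. \<not> Mvalid p i j \<Longrightarrow> cact C i a (x i j) = 0" using x0 hm_act_0[OF hm] by simp
    qed
    show "MZ p C (\<lambda>i j. cact C i a (x i j)) = (\<lambda>i j. cact C i a (MZ p C x i j))"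
      using hh_act[OF hm dd_hhom[OF C]] xc x hm_act_0[OF hm] by (simp add: fun_eq_iff MZ_def)
    fix b
    show "(\<lambda>i j. cact C i (a + b) (x i j)) = (\<lambda>i j. cact C i a (x i j)) + (\<lambda>i j. cact C i b (x i j))"
      using hm_add_act[OF hm] xc x by (simp add: fun_eq_iff)
    show "(\<lambda>i j. cact C i (hmult H a b) (x i j)) = (\<lambda>i j. cact C i a (cact C i b (x i j)))"
      using hm_mult_act[OF hm] xc x by (simp add: fun_eq_iff)
  qed
qed

definition Mtheta :: "nat \<Rightarrow> (nat \<Rightarrow> 'c \<Rightarrow> 'd) \<Rightarrow> (nat \<Rightarrow> nat \<Rightarrow> 'c) \<Rightarrow> nat \<Rightarrow> nat \<Rightarrow> 'd::zero" where
  "Mtheta p h x = (\<lambda>i j. if odd i then (if j = 0 then h (i - 1) (x (i - 1) 0) else 0)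
      else (if j = 0 \<and> i \<noteq> 0 then h (i - 1) (x (i - 1) (p - 2)) else 0))"

context fixes H :: "('b::finite,'k::field) hopf"
  and C :: "('c::ab_group_add,'b,'k) cx" and C' :: "('d::ab_group_add,'b,'k) cx" and p :: nat and h
  assumes C: "is_cx H UNIV C" and C': "is_cx H UNIV C'" and p2: "2 \<le> p"
    and h: "\<And>i. is_hhom UNIV (cx_deg C i) (cx_deg C' (Suc i)) (h i)"
begin

lemma h0: "h i 0 = 0" using hh_zero[OF cx_hmod[OF C] h] .
lemma hcar: "c \<in> cc C i \<Longrightarrow> h i c \<in> cc C' (Suc i)" using hh_car[OF cx_hmod[OF C] h] by simp

lemma theta_car: "x \<in> Mcar p C n \<Longrightarrow> Mtheta p h x \<in> Mcar p C' \<infinity>"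
proof -
  assume x: "x \<in> Mcar p C n"
  have xc: "\<And>i j. x i j \<in> cc C i" using Mcar_comp[OF C x] .
  show ?thesis
  proof (rule Mcar_infI)
    show "finite {(i, j). Mtheta p h x i j \<noteq> 0}"
    proof (rule supp_sub_fin[OF Mcar_fin[OF x], of _ "\<lambda>(a, b). (Suc a, 0)" "\<lambda>(a, b). (Suc a, 0)"])
      fix i j assume ne: "Mtheta p h x i j \<noteq> 0"
      show "(i, j) \<in> (\<lambda>(a, b). (Suc a, 0)) ` {(i, j). x i j \<noteq> 0} \<union> (\<lambda>(a, b). (Suc a, 0)) ` {(i, j). x i j \<noteq> 0}"
      proof (cases "odd i")
        case True
        then have "j = 0" "x (i - 1) 0 \<noteq> 0" "i = Suc (i - 1)" using ne h0 by (auto simp: Mtheta_def split: if_splits)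
        then show ?thesis by (intro UnI1 image_eqI[where x="(i - 1, 0)"]) auto
      next
        case False
        then have "j = 0" "x (i - 1) (p - 2) \<noteq> 0" "i = Suc (i - 1)" using ne h0 by (auto simp: Mtheta_def split: if_splits)
        then show ?thesis by (intro UnI1 image_eqI[where x="(i - 1, p - 2)"]) auto
      qed
    qed
    show "\<And>i j. Mvalid p i j \<Longrightarrow> Mtheta p h x i j \<in> cc C' i"
    proof -
      fix i j
      have "i \<noteq> 0 \<Longrightarrow> Suc (i - 1) = i" by simp
      then show "Mtheta p h x i j \<in> cc C' i"
        using hcar[OF xc, of "i - 1"] cc_zero[OF C'] by (auto simp: Mtheta_def)
    qed
    show "\<And>i j. \<not> Mvalid p i j \<Longrightarrow> Mtheta p h x i j = 0"
      using p2 by (auto simp: Mtheta_def Mvalid_def)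
  qed
qed

lemma theta_hhom: "is_hhom UNIV (Mmod p C \<infinity>) (Mmod p C' \<infinity>) (Mtheta p h)"
  unfolding is_hhom_def
proof (intro conjI ballI)
  fix x assume "x \<in> car (Mmod p C \<infinity>)"
  then show "Mtheta p h x \<in> car (Mmod p C' \<infinity>)" using theta_car by simp
next
  fix x y assume x: "x \<in> car (Mmod p C \<infinity>)" and y: "y \<in> car (Mmod p C \<infinity>)"
  have xc: "\<And>i j. x i j \<in> cc C i" "\<And>i j. y i j \<in> cc C i" using Mcar_comp[OF C] x y by auto
  have ha: "\<And>i c c'. c \<in> cc C i \<Longrightarrow> c' \<in> cc C i \<Longrightarrow> h i (c + c') = h i c + h i c'"
    using hh_add[OF cx_hmod[OF C] h] by simp
  show "Mtheta p h (x + y) = Mtheta p h x + Mtheta p h y"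
    by (simp add: Mtheta_def fun_eq_iff ha xc)
next
  fix a x assume x: "x \<in> car (Mmod p C \<infinity>)"
  have xc: "\<And>i j. x i j \<in> cc C i" using Mcar_comp[OF C] x by auto
  have ha: "\<And>i c. c \<in> cc C i \<Longrightarrow> h i (cact C i a c) = cact C' (Suc i) a (h i c)"
    using hh_act[OF cx_hmod[OF C] h] by simp
  have "\<And>i. i \<noteq> 0 \<Longrightarrow> Suc (i - 1) = i" by simp
  then show "Mtheta p h (act (Mmod p C \<infinity>) a x) = act (Mmod p C' \<infinity>) a (Mtheta p h x)"
    using hm_act_0[OF cx_hmod[OF C']] by (auto simp: Mtheta_def fun_eq_iff ha xc)
qed


lemma summand:
  assumes x: "x \<in> Mcar p C \<infinity>" and l: "l < p"
  shows "ZF p C' l (Mtheta p h (ZF p C (p - 1 - l) x)) i j =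
    (if odd i then (if j < p - 1 then (if l = j then h (i - 1) (dd C i (x i j)) else 0) + (if l = Suc j then dd C' (Suc i) (h i (x i j)) else 0) else 0)
     else (if j = 0 then (if l = 0 \<and> i \<noteq> 0 then h (i - 1) (dd C i (x i 0)) else 0) + (if l = p - 1 then dd C' (Suc i) (h i (x i 0)) else 0) else 0))"
proof (cases "odd i")
  case True
  then have si: "Suc (i - 1) = i" by (cases i) auto
  show ?thesis
  proof (cases "j < p - 1")
    case True
    show ?thesis
    proof (cases "l = j")
      case True
      then show ?thesis using \<open>odd i\<close> \<open>j < p - 1\<close> si p2 l by (auto simp: ZF_def Mtheta_def)
    next
      case False
      show ?thesis
      proof (cases "l = Suc j")
        case True
        then have "p - 1 - l = p - 2 - j" "p - 2 - (p - 2 - j) = j" "p - 2 < p - 1" using \<open>j < p - 1\<close> by auto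
        then show ?thesis using True \<open>odd i\<close> \<open>j < p - 1\<close> si p2 l by (auto simp: ZF_def Mtheta_def)
      next
        case False
        then show ?thesis using \<open>l \<noteq> j\<close> \<open>odd i\<close> \<open>j < p - 1\<close> si p2 l h0 dd_zero[OF C']
          by (auto simp: ZF_def Mtheta_def)
      qed
    qed
  next
    case False
    then show ?thesis using \<open>odd i\<close> by (auto simp: ZF_def Mtheta_def)
  qed
next
  case False
  show ?thesis
  proof (cases "j = 0")
    case True
    show ?thesis
    proof (cases "l = 0")
      case True
      have "p - 1 = Suc (p - 2)" "p - 1 \<noteq> 0" using p2 by auto
      then show ?thesis using True \<open>j = 0\<close> \<open>\<not> odd i\<close> p2 h0 dd_zero[OF C']
        by (cases i) (auto simp: ZF_def Mtheta_def)
    next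
      case False
      then show ?thesis using \<open>j = 0\<close> \<open>\<not> odd i\<close> p2 l h0 dd_zero[OF C']
        by (auto simp: ZF_def Mtheta_def)
    qed
  next
    case False
    then show ?thesis using \<open>\<not> odd i\<close> by (auto simp: ZF_def Mtheta_def)
  qed
qed


lemma sum_two_delta: "a < p \<Longrightarrow> b < p \<Longrightarrow> (\<Sum>l<(p::nat). (if l = a then A else 0) + (if l = b then B else 0)) = A + (B::'z::comm_monoid_add)"
  by (simp add: sum.distrib)

lemma T_identity:
  assumes x: "x \<in> Mcar p C \<infinity>"
  shows "(\<Sum>l<p. (MZ p C' ^^ l) (Mtheta p h ((MZ p C ^^ (p - 1 - l)) x)))
       = Mmap (\<lambda>i c. dd C' (Suc i) (h i c) + (if i = 0 then 0 else h (i - 1) (dd C i c))) x"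
proof -
  have G: "is_gmod p H UNIV (Mmod p C \<infinity>)" by (rule Mmod_gmod[OF C p2])
  have zc: "(MZ p C ^^ k) x \<in> Mcar p C \<infinity>" for k using gm_zpow[OF G, of x k] x by simp
  have e: "(MZ p C' ^^ l) (Mtheta p h ((MZ p C ^^ (p - 1 - l)) x)) = ZF p C' l (Mtheta p h (ZF p C (p - 1 - l) x))"
    if l: "l < p" for l
  proof -
    have "(MZ p C ^^ (p - 1 - l)) x = ZF p C (p - 1 - l) x" using Zpow_closed[OF C p2 x] l by simp
    moreover have "(MZ p C' ^^ l) (Mtheta p h ((MZ p C ^^ (p - 1 - l)) x)) = ZF p C' l (Mtheta p h ((MZ p C ^^ (p - 1 - l)) x))"
      using Zpow_closed[OF C' p2 theta_car[OF zc] l] .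
    ultimately show ?thesis by simp
  qed
  have xc: "\<And>i j. x i j \<in> cc C i" using Mcar_comp[OF C x] .
  have dz: "\<And>i. 0 < i \<Longrightarrow> dd C i 0 = 0" using dd_zero[OF C] by (metis Suc_pred)
  show ?thesis
  proof (rule ext, rule ext)
    fix i j
    have "(\<Sum>l<p. (MZ p C' ^^ l) (Mtheta p h ((MZ p C ^^ (p - 1 - l)) x))) i j
        = (\<Sum>l<p. ZF p C' l (Mtheta p h (ZF p C (p - 1 - l) x)) i j)"
      unfolding sum_fun_apply using e by simp
    also have "\<dots> = (\<Sum>l<p. (if odd i then (if j < p - 1 then (if l = j then h (i - 1) (dd C i (x i j)) else 0) + (if l = Suc j then dd C' (Suc i) (h i (x i j)) else 0) else 0)
     else (if j = 0 then (if l = 0 \<and> i \<noteq> 0 then h (i - 1) (dd C i (x i 0)) else 0) + (if l = p - 1 then dd C' (Suc i) (h i (x i 0)) else 0) else 0)))"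
      by (rule sum.cong[OF refl], rule summand[OF x]) simp
    also have "\<dots> = Mmap (\<lambda>i c. dd C' (Suc i) (h i c) + (if i = 0 then 0 else h (i - 1) (dd C i c))) x i j"
    proof (cases "odd i")
      case True
      then have i0: "i \<noteq> 0" by (cases i) auto
      show ?thesis
      proof (cases "j < p - 1")
        case True
        then have jj: "j < p" "Suc j < p" by auto
        have s2: "(\<Sum>l<p. (if l = j then h (i - 1) (dd C i (x i j)) else 0) + (if l = Suc j then dd C' (Suc i) (h i (x i j)) else 0))
           = dd C' (Suc i) (h i (x i j)) + h (i - 1) (dd C i (x i j))"
          by (subst sum_two_delta[OF jj]) (rule add.commute)
        show ?thesis using True \<open>odd i\<close> i0 s2 by (simp add: Mmap_def)
      next
        case False
        then have "x i j = 0" using Mcar_out[OF x] \<open>odd i\<close> by (simp add: Mvalid_def)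
        then show ?thesis using False \<open>odd i\<close> h0 dd_zero[OF C] dd_zero[OF C'] dz by (simp add: Mmap_def)
      qed
    next
      case False
      show ?thesis
      proof (cases "j = 0")
        case True
        show ?thesis
        proof (cases "i = 0")
          case True
          then show ?thesis using False \<open>j = 0\<close> p2 by (simp add: Mmap_def sum.delta)
        next
          case i0: False
          have jj: "0 < p" "p - 1 < p" using p2 by auto
          have s2: "(\<Sum>l<p. (if l = 0 then h (i - 1) (dd C i (x i 0)) else 0) + (if l = p - 1 then dd C' (Suc i) (h i (x i 0)) else 0))
             = dd C' (Suc i) (h i (x i 0)) + h (i - 1) (dd C i (x i 0))"
            by (subst sum_two_delta[OF jj]) (rule add.commute)
          show ?thesis using False \<open>j = 0\<close> i0 s2 by (simp add: Mmap_def)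
        qed
      next
        case False
        then have "x i j = 0" using Mcar_out[OF x] \<open>\<not> odd i\<close> by (simp add: Mvalid_def)
        then show ?thesis using False \<open>\<not> odd i\<close> h0 dd_zero[OF C] dd_zero[OF C'] dz by (simp add: Mmap_def)
      qed
    qed
    finally show "(\<Sum>l<p. (MZ p C' ^^ l) (Mtheta p h ((MZ p C ^^ (p - 1 - l)) x))) i j
        = Mmap (\<lambda>i c. dd C' (Suc i) (h i c) + (if i = 0 then 0 else h (i - 1) (dd C i c))) x i j" .
  qed
qed

end

lemma rec_construct:
  assumes base: "Inv 0 x0" and step: "\<And>i x. Inv i x \<Longrightarrow> \<exists>y. R i x y \<and> Inv (Suc i) y"
  shows "\<exists>f. f 0 = x0 \<and> (\<forall>i. Inv i (f i) \<and> R i (f i) (f (Suc i)))"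
proof -
  have "\<forall>i x. \<exists>y. Inv i x \<longrightarrow> R i x y \<and> Inv (Suc i) y" using step by blast
  then obtain g where g: "\<And>i x. Inv i x \<Longrightarrow> R i x (g i x) \<and> Inv (Suc i) (g i x)" by metis
  define f where "f = rec_nat x0 g"
  have f0: "f 0 = x0" and fS: "\<And>i. f (Suc i) = g i (f i)" by (simp_all add: f_def)
  have I: "Inv i (f i)" for i by (induction i) (use base g f0 fS in auto)
  show ?thesis using f0 fS I g by metis
qed

lemma hhom_diff:
  assumes N: "is_hmod H UNIV N" and a: "is_hhom UNIV M N f" and b: "is_hhom UNIV M N g"
  shows "is_hhom UNIV M N (\<lambda>v. f v - g v)"
  using a b unfolding is_hhom_def
  by (auto simp: hm_diff[OF N] hm_act_diff[OF N] algebra_simps)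

context fixes H :: "('b::finite,'k::field) hopf" assumes H: "finite_group_scheme H"
begin

lemma Mres_split:
  fixes C :: "('c::ab_group_add,'b,'k) cx"
  assumes C: "is_cx H UNIV C" and proj: "\<forall>i. hproj H (cx_deg C i)"
  shows "\<exists>\<psi> \<chi>. is_hhom UNIV (Mmod p C \<infinity>) (hfree H {(i, j, c). Mvalid p i j \<and> c \<in> cc C i}) \<psi> \<and>
     is_hhom UNIV (hfree H {(i, j, c). Mvalid p i j \<and> c \<in> cc C i}) (Mmod p C \<infinity>) \<chi> \<and>
     (\<forall>x\<in>Mcar p C \<infinity>. \<chi> (\<psi> x) = x)"
proof -
  let ?X = "{(i, j, c). Mvalid p i j \<and> c \<in> cc C i}"
  have "\<forall>i. \<exists>ir. is_hhom UNIV (cx_deg C i) (hfree H (cc C i)) (fst ir) \<and> is_hhom UNIV (hfree H (cc C i)) (cx_deg C i) (snd ir)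
      \<and> (\<forall>v\<in>cc C i. snd ir (fst ir v) = v)"
  proof
    fix i
    obtain \<iota> \<rho> where "is_hhom UNIV (cx_deg C i) (hfree H (cc C i)) \<iota>" "is_hhom UNIV (hfree H (cc C i)) (cx_deg C i) \<rho>"
      "\<forall>v\<in>cc C i. \<rho> (\<iota> v) = v" using proj[THEN spec, of i] unfolding hproj_def cx_deg_car by blast
    then show "\<exists>ir. is_hhom UNIV (cx_deg C i) (hfree H (cc C i)) (fst ir) \<and> is_hhom UNIV (hfree H (cc C i)) (cx_deg C i) (snd ir)
      \<and> (\<forall>v\<in>cc C i. snd ir (fst ir v) = v)" by (intro exI[of _ "(\<iota>, \<rho>)"]) simp
  qed
  then obtain IR where IR: "\<And>i. is_hhom UNIV (cx_deg C i) (hfree H (cc C i)) (fst (IR i))"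
    "\<And>i. is_hhom UNIV (hfree H (cc C i)) (cx_deg C i) (snd (IR i))"
    "\<And>i. \<forall>v\<in>cc C i. snd (IR i) (fst (IR i) v) = v" by metis
  define \<iota> where "\<iota> i = fst (IR i)" for i
  define \<rho> where "\<rho> i = snd (IR i)" for i
  have ih: "is_hhom UNIV (cx_deg C i) (hfree H (cc C i)) (\<iota> i)" for i using IR(1) by (simp add: \<iota>_def)
  have rh: "is_hhom UNIV (hfree H (cc C i)) (cx_deg C i) (\<rho> i)" for i using IR(2) by (simp add: \<rho>_def)
  have ri: "v \<in> cc C i \<Longrightarrow> \<rho> i (\<iota> i v) = v" for i v using IR(3) by (simp add: \<iota>_def \<rho>_def)
  have hmC: "is_hmod H UNIV (cx_deg C i)" for i by (rule cx_hmod[OF C])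
  have FH: "is_hmod H UNIV (hfree H (cc C i))" for i by (rule hfree_hmod[OF H])
  have i0: "\<iota> i 0 = 0" for i using hh_zero[OF hmC ih] .
  have r0: "\<rho> i 0 = 0" for i using hh_zero[OF FH rh] .
  have icar: "v \<in> cc C i \<Longrightarrow> \<iota> i v \<in> car (hfree H (cc C i))" for v i using hh_car[OF hmC ih] by simp
  have rcar: "F \<in> car (hfree H (cc C i)) \<Longrightarrow> \<rho> i F \<in> cc C i" for F i using hh_car[OF FH rh] by simp
  define \<psi> where "\<psi> x = (\<lambda>(i, j, c). if Mvalid p i j then \<iota> i (x i j) c else 0)" for x :: "nat \<Rightarrow> nat \<Rightarrow> 'c"
  define \<chi> where "\<chi> F = (\<lambda>i j. if Mvalid p i j then \<rho> i (\<lambda>c. F (i, j, c)) else 0)" for F :: "nat \<times> nat \<times> 'c \<Rightarrow> 'b \<Rightarrow> 'k"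
  have slice: "(\<lambda>c. F (i, j, c)) \<in> car (hfree H (cc C i))" if F: "F \<in> car (hfree H ?X)" and v: "Mvalid p i j" for F i j
  proof -
    have "{c. F (i, j, c) \<noteq> 0} \<subseteq> (\<lambda>(i, j, c). c) ` {v. F v \<noteq> 0}" by force
    then have "finite {c. F (i, j, c) \<noteq> 0}" using F finite_subset by (auto simp: hfree_car)
    then show ?thesis using F v by (auto simp: hfree_car)
  qed
  have psi: "is_hhom UNIV (Mmod p C \<infinity>) (hfree H ?X) \<psi>"
    unfolding is_hhom_def
  proof (intro conjI ballI)
    fix x assume x: "x \<in> car (Mmod p C \<infinity>)"
    have xc: "\<And>i j. x i j \<in> cc C i" using Mcar_comp[OF C] x by simp
    have sub: "{v. \<psi> x v \<noteq> 0} \<subseteq> (\<lambda>(ij, c). (fst ij, snd ij, c)) ` (SIGMA ij:{(i, j). x i j \<noteq> 0}. {c. \<iota> (fst ij) (x (fst ij) (snd ij)) c \<noteq> 0})"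
    proof
      fix v assume v: "v \<in> {v. \<psi> x v \<noteq> 0}"
      obtain i j c where vv: "v = (i, j, c)" by (cases v) auto
      then have "x i j \<noteq> 0" "\<iota> i (x i j) c \<noteq> 0" using v i0 by (auto simp: \<psi>_def split: if_splits)
      then show "v \<in> (\<lambda>(ij, c). (fst ij, snd ij, c)) ` (SIGMA ij:{(i, j). x i j \<noteq> 0}. {c. \<iota> (fst ij) (x (fst ij) (snd ij)) c \<noteq> 0})"
        using vv by (intro image_eqI[where x="((i, j), c)"]) auto
    qed
    have "finite (SIGMA ij:{(i, j). x i j \<noteq> 0}. {c. \<iota> (fst ij) (x (fst ij) (snd ij)) c \<noteq> 0})"
      using Mcar_fin[of x] x icar[OF xc] by (intro finite_SigmaI) (auto simp: hfree_car)
    then have "finite {v. \<psi> x v \<noteq> 0}" using sub finite_subset by blast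
    moreover have "\<forall>v. v \<notin> ?X \<longrightarrow> \<psi> x v = 0"
      using icar[OF xc] by (auto simp: \<psi>_def hfree_car)
    ultimately show "\<psi> x \<in> car (hfree H ?X)" by (simp add: hfree_car)
  next
    fix x y assume x: "x \<in> car (Mmod p C \<infinity>)" and y: "y \<in> car (Mmod p C \<infinity>)"
    have xc: "\<And>i j. x i j \<in> cc C i" "\<And>i j. y i j \<in> cc C i" using Mcar_comp[OF C] x y by auto
    show "\<psi> (x + y) = \<psi> x + \<psi> y"
      using hh_add[OF hmC ih] xc by (auto simp: \<psi>_def fun_eq_iff)
  next
    fix a x assume x: "x \<in> car (Mmod p C \<infinity>)"
    have xc: "\<And>i j. x i j \<in> cc C i" using Mcar_comp[OF C] x by auto
    show "\<psi> (act (Mmod p C \<infinity>) a x) = act (hfree H ?X) a (\<psi> x)"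
      using hh_act[OF hmC ih] xc by (auto simp: \<psi>_def fun_eq_iff hfree_act)
  qed
  have chi: "is_hhom UNIV (hfree H ?X) (Mmod p C \<infinity>) \<chi>"
    unfolding is_hhom_def
  proof (intro conjI ballI)
    fix F assume F: "F \<in> car (hfree H ?X)"
    show "\<chi> F \<in> car (Mmod p C \<infinity>)" unfolding Mmod_car
    proof (rule Mcar_infI)
      have "{(i, j). \<chi> F i j \<noteq> 0} \<subseteq> (\<lambda>(i, j, c). (i, j)) ` {v. F v \<noteq> 0}"
      proof
        fix z assume z: "z \<in> {(i, j). \<chi> F i j \<noteq> 0}"
        obtain i j where zz: "z = (i, j)" by (cases z)
        then have "(\<lambda>c. F (i, j, c)) \<noteq> 0" using z r0 by (auto simp: \<chi>_def split: if_splits)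
        then obtain c where "F (i, j, c) \<noteq> 0" by (auto simp: fun_eq_iff)
        then show "z \<in> (\<lambda>(i, j, c). (i, j)) ` {v. F v \<noteq> 0}" using zz by (intro image_eqI[where x="(i, j, c)"]) auto
      qed
      then show "finite {(i, j). \<chi> F i j \<noteq> 0}" using F finite_subset by (auto simp: hfree_car)
      show "\<And>i j. Mvalid p i j \<Longrightarrow> \<chi> F i j \<in> cc C i" using rcar slice[OF F] by (simp add: \<chi>_def)
      show "\<And>i j. \<not> Mvalid p i j \<Longrightarrow> \<chi> F i j = 0" by (simp add: \<chi>_def)
    qed
  next
    fix F G assume F: "F \<in> car (hfree H ?X)" and G: "G \<in> car (hfree H ?X)"
    have "\<rho> i (\<lambda>c. (F + G) (i, j, c)) = \<rho> i (\<lambda>c. F (i, j, c)) + \<rho> i (\<lambda>c. G (i, j, c))" if "Mvalid p i j" for i j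
    proof -
      have "(\<lambda>c. (F + G) (i, j, c)) = (\<lambda>c. F (i, j, c)) + (\<lambda>c. G (i, j, c))" by (simp add: fun_eq_iff)
      then show ?thesis using hh_add[OF FH rh slice[OF F that] slice[OF G that]] by simp
    qed
    then show "\<chi> (F + G) = \<chi> F + \<chi> G" by (auto simp: \<chi>_def fun_eq_iff)
  next
    fix a F assume F: "F \<in> car (hfree H ?X)"
    have "\<rho> i (\<lambda>c. act (hfree H ?X) a F (i, j, c)) = cact C i a (\<rho> i (\<lambda>c. F (i, j, c)))" if "Mvalid p i j" for i j
    proof -
      have "(\<lambda>c. act (hfree H ?X) a F (i, j, c)) = act (hfree H (cc C i)) a (\<lambda>c. F (i, j, c))" by (simp add: hfree_act)
      then show ?thesis using hh_act[OF FH rh _ slice[OF F that]] by simp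
    qed
    then show "\<chi> (act (hfree H ?X) a F) = act (Mmod p C \<infinity>) a (\<chi> F)"
      using hm_act_0[OF hmC] by (auto simp: \<chi>_def fun_eq_iff)
  qed
  have cp: "\<chi> (\<psi> x) = x" if x: "x \<in> Mcar p C \<infinity>" for x
  proof (rule ext, rule ext)
    fix i j
    have xc: "\<And>i j. x i j \<in> cc C i" using Mcar_comp[OF C] x by auto
    show "\<chi> (\<psi> x) i j = x i j"
      using ri[OF xc] Mcar_out[OF x] by (auto simp: \<chi>_def \<psi>_def)
  qed
  show ?thesis using psi chi cp by blast
qed

end

lemma hh_cc: "is_hmod H S' (cx_deg C i) \<Longrightarrow> is_hhom S (cx_deg C i) N f \<Longrightarrow> c \<in> cc C i \<Longrightarrow> f c \<in> car N"
  using hh_car[of H S' "cx_deg C i" S N f c] by simp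

context fixes H :: "('b::finite,'k::field) hopf" assumes H: "finite_group_scheme H"
begin

lemma homotopy_exists:
  fixes C :: "('c::ab_group_add,'b,'k) cx" and C' :: "('d::ab_group_add,'b,'k) cx"
  assumes C: "is_cx H UNIV C" and C': "is_cx H UNIV C'" and proj: "\<forall>i. hproj H (cx_deg C i)"
    and ex: "\<forall>i. {x \<in> cc C' (Suc i). dd C' (Suc i) x = 0} \<subseteq> dd C' (Suc (Suc i)) ` cc C' (Suc (Suc i))"
    and g: "\<forall>i. is_hhom UNIV (cx_deg C i) (cx_deg C' i) (\<gamma> i)"
    and gc: "\<forall>i. \<forall>c\<in>cc C (Suc i). \<gamma> i (dd C (Suc i) c) = dd C' (Suc i) (\<gamma> (Suc i) c)"
    and g0: "\<gamma> 0 ` cc C 0 \<subseteq> dd C' 1 ` cc C' 1"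
  shows "\<exists>h. \<forall>i. is_hhom UNIV (cx_deg C i) (cx_deg C' (Suc i)) (h i) \<and>
     (\<forall>c\<in>cc C i. \<gamma> i c = dd C' (Suc i) (h i c) + (if i = 0 then 0 else h (i - 1) (dd C i c)))"
proof -
  have hmC: "is_hmod H UNIV (cx_deg C i)" for i by (rule cx_hmod[OF C])
  have hmC': "is_hmod H UNIV (cx_deg C' i)" for i by (rule cx_hmod[OF C'])
  have dC: "is_hhom UNIV (cx_deg C (Suc i)) (cx_deg C i) (dd C (Suc i))" for i by (rule dd_hhom[OF C])
  have dC': "is_hhom UNIV (cx_deg C' (Suc i)) (cx_deg C' i) (dd C' (Suc i))" for i by (rule dd_hhom[OF C'])
  have gh: "is_hhom UNIV (cx_deg C i) (cx_deg C' i) (\<gamma> i)" for i using g by blast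
  define Inv where "Inv i f \<longleftrightarrow> is_hhom UNIV (cx_deg C i) (cx_deg C' (Suc i)) f \<and>
      (\<forall>c\<in>cc C (Suc i). dd C' (Suc i) (\<gamma> (Suc i) c - f (dd C (Suc i) c)) = 0)" for i f
  define R where "R i f f' \<longleftrightarrow> (\<forall>c\<in>cc C (Suc i). \<gamma> (Suc i) c = dd C' (Suc (Suc i)) (f' c) + f (dd C (Suc i) c))"
    for i and f f' :: "'c \<Rightarrow> 'd"
  obtain h0 where h0: "is_hhom UNIV (cx_deg C 0) (cx_deg C' 1) h0" and h0e: "\<forall>c\<in>cc C 0. dd C' 1 (h0 c) = \<gamma> 0 c"
    using hproj_lift[OF H proj[THEN spec, of 0] hmC' hmC' dC'[of 0] gh[of 0]] g0 by auto
  have I0: "Inv 0 h0" unfolding Inv_def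
  proof (intro conjI ballI)
    show "is_hhom UNIV (cx_deg C 0) (cx_deg C' (Suc 0)) h0" using h0 by simp
    fix c assume c: "c \<in> cc C (Suc 0)"
    have dc: "dd C (Suc 0) c \<in> cc C 0" using dd_car[OF C c] .
    have "dd C' (Suc 0) (\<gamma> (Suc 0) c - h0 (dd C (Suc 0) c)) = dd C' (Suc 0) (\<gamma> (Suc 0) c) - dd C' (Suc 0) (h0 (dd C (Suc 0) c))"
      using hh_diff[OF hmC' dC'] hh_cc[OF hmC gh c] hh_cc[OF hmC h0 dc] by simp
    also have "\<dots> = 0" using gc c h0e dc by simp
    finally show "dd C' (Suc 0) (\<gamma> (Suc 0) c - h0 (dd C (Suc 0) c)) = 0" .
  qed
  have step: "\<exists>f'. R i f f' \<and> Inv (Suc i) f'" if I: "Inv i f" for i f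
  proof -
    have fh: "is_hhom UNIV (cx_deg C i) (cx_deg C' (Suc i)) f" using I by (simp add: Inv_def)
    define \<phi> where "\<phi> c = \<gamma> (Suc i) c - f (dd C (Suc i) c)" for c
    have ph: "is_hhom UNIV (cx_deg C (Suc i)) (cx_deg C' (Suc i)) \<phi>"
      unfolding \<phi>_def by (rule hhom_diff[OF hmC' gh hhom_comp[OF dC fh]])
    have im: "\<phi> ` car (cx_deg C (Suc i)) \<subseteq> dd C' (Suc (Suc i)) ` car (cx_deg C' (Suc (Suc i)))"
    proof
      fix y assume "y \<in> \<phi> ` car (cx_deg C (Suc i))"
      then obtain c where c: "c \<in> cc C (Suc i)" and y: "y = \<phi> c" by auto
      have "y \<in> cc C' (Suc i)" using hh_cc[OF hmC ph] c y by simp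
      moreover have "dd C' (Suc i) y = 0" using I c y by (simp add: Inv_def \<phi>_def)
      ultimately show "y \<in> dd C' (Suc (Suc i)) ` car (cx_deg C' (Suc (Suc i)))" using ex by auto
    qed
    obtain f' where f': "is_hhom UNIV (cx_deg C (Suc i)) (cx_deg C' (Suc (Suc i))) f'"
      and f'e: "\<forall>c\<in>cc C (Suc i). dd C' (Suc (Suc i)) (f' c) = \<phi> c"
      using hproj_lift[OF H proj[THEN spec, of "Suc i"] hmC' hmC' dC'[of "Suc i"] ph im] by auto
    show ?thesis
    proof (intro exI conjI)
      show "R i f f'" unfolding R_def using f'e by (simp add: \<phi>_def)
      show "Inv (Suc i) f'" unfolding Inv_def
      proof (intro conjI ballI)
        show "is_hhom UNIV (cx_deg C (Suc i)) (cx_deg C' (Suc (Suc i))) f'" by (rule f')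
        fix c assume c: "c \<in> cc C (Suc (Suc i))"
        have dc: "dd C (Suc (Suc i)) c \<in> cc C (Suc i)" using dd_car[OF C c] .
        have "dd C' (Suc (Suc i)) (\<gamma> (Suc (Suc i)) c - f' (dd C (Suc (Suc i)) c))
            = dd C' (Suc (Suc i)) (\<gamma> (Suc (Suc i)) c) - dd C' (Suc (Suc i)) (f' (dd C (Suc (Suc i)) c))"
          using hh_diff[OF hmC' dC'] hh_cc[OF hmC gh c] hh_cc[OF hmC f' dc] by simp
        also have "\<dots> = \<gamma> (Suc i) (dd C (Suc (Suc i)) c) - \<phi> (dd C (Suc (Suc i)) c)"
          using gc c f'e dc by simp
        also have "\<dots> = f (dd C (Suc i) (dd C (Suc (Suc i)) c))" by (simp add: \<phi>_def)
        also have "\<dots> = 0" using dd_dd[OF C c] hh_zero[OF hmC fh] by simp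
        finally show "dd C' (Suc (Suc i)) (\<gamma> (Suc (Suc i)) c - f' (dd C (Suc (Suc i)) c)) = 0" .
      qed
    qed
  qed
  obtain F where F0: "F 0 = h0" and FI: "\<And>i. Inv i (F i) \<and> R i (F i) (F (Suc i))"
    using rec_construct[of Inv h0 R, OF I0 step] by blast
  show ?thesis
  proof (intro exI allI conjI ballI)
    fix i
    show "is_hhom UNIV (cx_deg C i) (cx_deg C' (Suc i)) (F i)" using FI by (simp add: Inv_def)
    fix c assume c: "c \<in> cc C i"
    show "\<gamma> i c = dd C' (Suc i) (F i c) + (if i = 0 then 0 else F (i - 1) (dd C i c))"
    proof (cases i)
      case 0 then show ?thesis using h0e c F0 by simp
    next
      case (Suc k) then show ?thesis using FI[of k] c by (simp add: R_def)
    qed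
  qed
qed

lemma comparison_exists:
  fixes C :: "('c::ab_group_add,'b,'k) cx" and D :: "('d::ab_group_add,'b,'k) cx"
    and N :: "('n::ab_group_add,'b,'k) hmod"
  assumes rC: "proj_resolution H C N epsC" and rD: "proj_resolution H D N epsD"
  shows "\<exists>\<sigma>. is_chain_map UNIV C D \<sigma> \<and> (\<forall>c\<in>cc C 0. epsD (\<sigma> 0 c) = epsC c)"
proof -
  have C: "is_cx H UNIV C" and D: "is_cx H UNIV D" and Nm: "is_hmod H UNIV N"
    and proj: "\<forall>i. hproj H (cx_deg C i)"
    and eC: "is_hhom UNIV (cx_deg C 0) N epsC" and eD: "is_hhom UNIV (cx_deg D 0) N epsD"
    and eCs: "epsC ` cc C 0 = car N" and eDs: "epsD ` cc D 0 = car N"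
    and kC: "{x \<in> cc C 0. epsC x = 0} = dd C 1 ` cc C 1" and kD: "{x \<in> cc D 0. epsD x = 0} = dd D 1 ` cc D 1"
    and exD: "\<forall>i. {x \<in> cc D (Suc i). dd D (Suc i) x = 0} = dd D (Suc (Suc i)) ` cc D (Suc (Suc i))"
    using rC rD by (simp_all add: proj_resolution_def)
  have hmC: "is_hmod H UNIV (cx_deg C i)" for i by (rule cx_hmod[OF C])
  have hmD: "is_hmod H UNIV (cx_deg D i)" for i by (rule cx_hmod[OF D])
  have dC: "is_hhom UNIV (cx_deg C (Suc i)) (cx_deg C i) (dd C (Suc i))" for i by (rule dd_hhom[OF C])
  have dD: "is_hhom UNIV (cx_deg D (Suc i)) (cx_deg D i) (dd D (Suc i))" for i by (rule dd_hhom[OF D])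
  define Inv where "Inv i f \<longleftrightarrow> is_hhom UNIV (cx_deg C i) (cx_deg D i) f \<and>
      (\<forall>c\<in>cc C (Suc i). f (dd C (Suc i) c) \<in> dd D (Suc i) ` cc D (Suc i))" for i f
  define R where "R i f f' \<longleftrightarrow> (\<forall>c\<in>cc C (Suc i). dd D (Suc i) (f' c) = f (dd C (Suc i) c))"
    for i and f f' :: "'c \<Rightarrow> 'd"
  obtain s0 where s0: "is_hhom UNIV (cx_deg C 0) (cx_deg D 0) s0" and s0e: "\<forall>c\<in>cc C 0. epsD (s0 c) = epsC c"
    using hproj_lift[OF H proj[THEN spec, of 0] hmD Nm eD eC] eCs eDs by auto
  have I0: "Inv 0 s0" unfolding Inv_def
  proof (intro conjI ballI)
    show "is_hhom UNIV (cx_deg C 0) (cx_deg D 0) s0" by (rule s0)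
    fix c assume c: "c \<in> cc C (Suc 0)"
    have dc: "dd C (Suc 0) c \<in> cc C 0" using dd_car[OF C c] .
    have "epsC (dd C (Suc 0) c) = 0" using kC c by auto
    then have "epsD (s0 (dd C (Suc 0) c)) = 0" using s0e dc by simp
    moreover have "s0 (dd C (Suc 0) c) \<in> cc D 0" using hh_cc[OF hmC s0 dc] by simp
    ultimately show "s0 (dd C (Suc 0) c) \<in> dd D (Suc 0) ` cc D (Suc 0)" using kD by auto
  qed
  have step: "\<exists>f'. R i f f' \<and> Inv (Suc i) f'" if I: "Inv i f" for i f
  proof -
    have fh: "is_hhom UNIV (cx_deg C i) (cx_deg D i) f" using I by (simp add: Inv_def)
    have ph: "is_hhom UNIV (cx_deg C (Suc i)) (cx_deg D i) (\<lambda>c. f (dd C (Suc i) c))"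
      by (rule hhom_comp[OF dC fh])
    have im: "(\<lambda>c. f (dd C (Suc i) c)) ` car (cx_deg C (Suc i)) \<subseteq> dd D (Suc i) ` car (cx_deg D (Suc i))"
      using I by (auto simp: Inv_def)
    obtain f' where f': "is_hhom UNIV (cx_deg C (Suc i)) (cx_deg D (Suc i)) f'"
      and f'e: "\<forall>c\<in>cc C (Suc i). dd D (Suc i) (f' c) = f (dd C (Suc i) c)"
      using hproj_lift[OF H proj[THEN spec, of "Suc i"] hmD hmD dD[of i] ph im] by auto
    show ?thesis
    proof (intro exI conjI)
      show "R i f f'" unfolding R_def using f'e by simp
      show "Inv (Suc i) f'" unfolding Inv_def
      proof (intro conjI ballI)
        show "is_hhom UNIV (cx_deg C (Suc i)) (cx_deg D (Suc i)) f'" by (rule f')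
        fix c assume c: "c \<in> cc C (Suc (Suc i))"
        have dc: "dd C (Suc (Suc i)) c \<in> cc C (Suc i)" using dd_car[OF C c] .
        have "dd D (Suc i) (f' (dd C (Suc (Suc i)) c)) = f (dd C (Suc i) (dd C (Suc (Suc i)) c))" using f'e dc by simp
        also have "\<dots> = 0" using dd_dd[OF C c] hh_zero[OF hmC fh] by simp
        finally have "dd D (Suc i) (f' (dd C (Suc (Suc i)) c)) = 0" .
        moreover have "f' (dd C (Suc (Suc i)) c) \<in> cc D (Suc i)" using hh_cc[OF hmC f' dc] by simp
        ultimately show "f' (dd C (Suc (Suc i)) c) \<in> dd D (Suc (Suc i)) ` cc D (Suc (Suc i))" using exD by blast
      qed
    qed
  qed
  obtain F where F0: "F 0 = s0" and FI: "\<And>i. Inv i (F i) \<and> R i (F i) (F (Suc i))"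
    using rec_construct[of Inv s0 R, OF I0 step] by blast
  show ?thesis
  proof (intro exI conjI ballI)
    show "is_chain_map UNIV C D F" unfolding is_chain_map_def
      using FI by (auto simp: Inv_def R_def)
    fix c assume "c \<in> cc C 0" then show "epsD (F 0 c) = epsC c" using F0 s0e by simp
  qed
qed

end

lemma part4:
  fixes H :: "('b::finite,'k::field) hopf" and C :: "('c::ab_group_add,'b,'k) cx"
  assumes H: "finite_group_scheme H" and p2: "2 \<le> p" and C: "is_cx H UNIV C"
    and proj: "\<forall>i. hproj H (cx_deg C i)" and exact: "cx_exact C"
  shows "gproj p H (Mmod p C \<infinity>)"
proof -
  have p0: "0 < p" using p2 by simp
  have G: "is_gmod p H UNIV (Mmod p C \<infinity>)" by (rule Mmod_gmod[OF C p2])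
  have ex: "\<forall>i. {x \<in> cc C (Suc i). dd C (Suc i) x = 0} \<subseteq> dd C (Suc (Suc i)) ` cc C (Suc (Suc i))"
  proof
    fix i show "{x \<in> cc C (Suc i). dd C (Suc i) x = 0} \<subseteq> dd C (Suc (Suc i)) ` cc C (Suc (Suc i))"
      using exact[unfolded cx_exact_def, THEN spec, of "Suc i"] by simp
  qed
  have g0: "(\<lambda>c. c) ` cc C 0 \<subseteq> dd C 1 ` cc C 1"
    using exact[unfolded cx_exact_def, THEN spec, of 0] by simp
  obtain h where hh: "\<And>i. is_hhom UNIV (cx_deg C i) (cx_deg C (Suc i)) (h i)"
    and he: "\<And>i. \<forall>c\<in>cc C i. c = dd C (Suc i) (h i c) + (if i = 0 then 0 else h (i - 1) (dd C i c))"
  proof -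
    have "\<exists>h. \<forall>i. is_hhom UNIV (cx_deg C i) (cx_deg C (Suc i)) (h i) \<and>
       (\<forall>c\<in>cc C i. c = dd C (Suc i) (h i c) + (if i = 0 then 0 else h (i - 1) (dd C i c)))"
      by (rule homotopy_exists[OF H C C proj ex, where \<gamma>="\<lambda>i c. c", simplified]) (use g0 in \<open>auto simp: is_hhom_def\<close>)
    then show ?thesis using that by blast
  qed
  have T: "(\<Sum>l<p. (MZ p C ^^ l) (Mtheta p h ((MZ p C ^^ (p - 1 - l)) x))) = x" if x: "x \<in> Mcar p C \<infinity>" for x
  proof -
    have "(\<Sum>l<p. (MZ p C ^^ l) (Mtheta p h ((MZ p C ^^ (p - 1 - l)) x)))
       = Mmap (\<lambda>i c. dd C (Suc i) (h i c) + (if i = 0 then 0 else h (i - 1) (dd C i c))) x"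
      by (rule T_identity[OF C C p2 hh x])
    also have "\<dots> = x" using he Mcar_comp[OF C x] by (simp add: Mmap_def fun_eq_iff)
    finally show ?thesis .
  qed
  obtain \<psi> \<chi> where psi: "is_hhom UNIV (Mmod p C \<infinity>) (hfree H {(i, j, c). Mvalid p i j \<and> c \<in> cc C i}) \<psi>"
    and chi: "is_hhom UNIV (hfree H {(i, j, c). Mvalid p i j \<and> c \<in> cc C i}) (Mmod p C \<infinity>) \<chi>"
    and cp: "\<forall>x\<in>Mcar p C \<infinity>. \<chi> (\<psi> x) = x"
    using Mres_split[OF H C proj] by blast
  have chi': "is_hhom UNIV (hfree H {(i, j, c). Mvalid p i j \<and> c \<in> cc C i}) (Mmod p C \<infinity>) (\<lambda>F. Mtheta p h (\<chi> F))"
    by (rule hhom_comp[OF chi theta_hhom[OF C C p2 hh]])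
  obtain \<alpha> \<beta> where a: "is_ghom UNIV (Mmod p C \<infinity>) (gfree p H {(i, j, c). Mvalid p i j \<and> c \<in> cc C i}) \<alpha>"
    and b: "is_ghom UNIV (gfree p H {(i, j, c). Mvalid p i j \<and> c \<in> cc C i}) (Mmod p C \<infinity>) \<beta>"
    and ba: "\<forall>m\<in>car (Mmod p C \<infinity>). \<beta> (\<alpha> m) = (\<Sum>l<p. (zop (Mmod p C \<infinity>) ^^ l) (Mtheta p h (\<chi> (\<psi> ((zop (Mmod p C \<infinity>) ^^ (p - 1 - l)) m)))))"
    using coind_factor[OF H p0 G G psi chi'] by blast
  have "\<forall>m\<in>car (Mmod p C \<infinity>). \<beta> (\<alpha> m) = m"
  proof
    fix m assume m: "m \<in> car (Mmod p C \<infinity>)"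
    have "\<beta> (\<alpha> m) = (\<Sum>l<p. (MZ p C ^^ l) (Mtheta p h ((MZ p C ^^ (p - 1 - l)) m)))"
      using ba m cp gm_zpow[OF G] by simp
    also have "\<dots> = m" using T m by simp
    finally show "\<beta> (\<alpha> m) = m" .
  qed
  then show ?thesis by (rule gproj_via[OF H p0 G a b])
qed

lemma selfmap_stably_zero:
  fixes H :: "('b::finite,'k::field) hopf" and C :: "('c::ab_group_add,'b,'k) cx"
    and N :: "('n::ab_group_add,'b,'k) hmod"
  assumes H: "finite_group_scheme H" and p2: "2 \<le> p" and rC: "proj_resolution H C N epsC"
    and al: "is_chain_map UNIV C C \<alpha>" and ae: "\<forall>c\<in>cc C 0. epsC (\<alpha> 0 c) = epsC c"
  shows "stably_zero p H (Mmod p C \<infinity>) (Mmod p C \<infinity>) (\<lambda>v. Mmap \<alpha> v - v)"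
proof -
  have p0: "0 < p" using p2 by simp
  have C: "is_cx H UNIV C" and Nm: "is_hmod H UNIV N"
    and proj: "\<forall>i. hproj H (cx_deg C i)" and eC: "is_hhom UNIV (cx_deg C 0) N epsC"
    and kC: "{x \<in> cc C 0. epsC x = 0} = dd C 1 ` cc C 1"
    and exC: "\<forall>i. {x \<in> cc C (Suc i). dd C (Suc i) x = 0} = dd C (Suc (Suc i)) ` cc C (Suc (Suc i))"
    using rC by (simp_all add: proj_resolution_def)
  have G: "is_gmod p H UNIV (Mmod p C \<infinity>)" by (rule Mmod_gmod[OF C p2])
  have hmC: "is_hmod H UNIV (cx_deg C i)" for i by (rule cx_hmod[OF C])
  have ah: "is_hhom UNIV (cx_deg C i) (cx_deg C i) (\<alpha> i)" for i using al by (simp add: is_chain_map_def)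
  have ad: "\<forall>c\<in>cc C (Suc i). \<alpha> i (dd C (Suc i) c) = dd C (Suc i) (\<alpha> (Suc i) c)" for i
    using al by (simp add: is_chain_map_def)
  define \<gamma> where "\<gamma> i c = \<alpha> i c - c" for i c
  have gh: "\<forall>i. is_hhom UNIV (cx_deg C i) (cx_deg C i) (\<gamma> i)"
    unfolding \<gamma>_def using hhom_diff[OF hmC ah, of _ "\<lambda>c. c"] by (simp add: is_hhom_def)
  have gc: "\<forall>i. \<forall>c\<in>cc C (Suc i). \<gamma> i (dd C (Suc i) c) = dd C (Suc i) (\<gamma> (Suc i) c)"
  proof (intro allI ballI)
    fix i c assume c: "c \<in> cc C (Suc i)"
    have "dd C (Suc i) (\<alpha> (Suc i) c - c) = dd C (Suc i) (\<alpha> (Suc i) c) - dd C (Suc i) c"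
      using hh_diff[OF hmC dd_hhom[OF C]] hh_cc[OF hmC ah c] c by simp
    then show "\<gamma> i (dd C (Suc i) c) = dd C (Suc i) (\<gamma> (Suc i) c)" using ad c by (simp add: \<gamma>_def)
  qed
  have g0: "\<gamma> 0 ` cc C 0 \<subseteq> dd C 1 ` cc C 1"
  proof
    fix y assume "y \<in> \<gamma> 0 ` cc C 0"
    then obtain c where c: "c \<in> cc C 0" and y: "y = \<gamma> 0 c" by auto
    have yc: "y \<in> cc C 0" using hh_cc[OF hmC gh[rule_format, of 0] c] y by simp
    have "epsC y = epsC (\<alpha> 0 c) - epsC c" using hh_diff[OF hmC eC] hh_cc[OF hmC ah c] c y by (simp add: \<gamma>_def)
    then have "epsC y = 0" using ae c by simp
    then show "y \<in> dd C 1 ` cc C 1" using kC yc by auto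
  qed
  obtain h where hh: "\<And>i. is_hhom UNIV (cx_deg C i) (cx_deg C (Suc i)) (h i)"
    and he: "\<And>i. \<forall>c\<in>cc C i. \<gamma> i c = dd C (Suc i) (h i c) + (if i = 0 then 0 else h (i - 1) (dd C i c))"
    using homotopy_exists[OF H C C proj _ gh gc g0] exC by blast
  have T: "(\<Sum>l<p. (MZ p C ^^ l) (Mtheta p h ((MZ p C ^^ (p - 1 - l)) x))) = Mmap \<alpha> x - x" if x: "x \<in> Mcar p C \<infinity>" for x
  proof -
    have "(\<Sum>l<p. (MZ p C ^^ l) (Mtheta p h ((MZ p C ^^ (p - 1 - l)) x)))
       = Mmap (\<lambda>i c. dd C (Suc i) (h i c) + (if i = 0 then 0 else h (i - 1) (dd C i c))) x"
      by (rule T_identity[OF C C p2 hh x])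
    also have "\<dots> = Mmap \<alpha> x - x" using he Mcar_comp[OF C x] by (simp add: Mmap_def fun_eq_iff \<gamma>_def)
    finally show ?thesis .
  qed
  obtain \<psi> \<chi> where psi: "is_hhom UNIV (Mmod p C \<infinity>) (hfree H {(i, j, c). Mvalid p i j \<and> c \<in> cc C i}) \<psi>"
    and chi: "is_hhom UNIV (hfree H {(i, j, c). Mvalid p i j \<and> c \<in> cc C i}) (Mmod p C \<infinity>) \<chi>"
    and cp: "\<forall>x\<in>Mcar p C \<infinity>. \<chi> (\<psi> x) = x"
    using Mres_split[OF H C proj] by blast
  have chi': "is_hhom UNIV (hfree H {(i, j, c). Mvalid p i j \<and> c \<in> cc C i}) (Mmod p C \<infinity>) (\<lambda>F. Mtheta p h (\<chi> F))"
    by (rule hhom_comp[OF chi theta_hhom[OF C C p2 hh]])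
  obtain a b where a: "is_ghom UNIV (Mmod p C \<infinity>) (gfree p H {(i, j, c). Mvalid p i j \<and> c \<in> cc C i}) a"
    and b: "is_ghom UNIV (gfree p H {(i, j, c). Mvalid p i j \<and> c \<in> cc C i}) (Mmod p C \<infinity>) b"
    and ba: "\<forall>m\<in>car (Mmod p C \<infinity>). b (a m) = (\<Sum>l<p. (zop (Mmod p C \<infinity>) ^^ l) (Mtheta p h (\<chi> (\<psi> ((zop (Mmod p C \<infinity>) ^^ (p - 1 - l)) m)))))"
    using coind_factor[OF H p0 G G psi chi'] by blast
  have "\<forall>m\<in>car (Mmod p C \<infinity>). Mmap \<alpha> m - m = b (a m)"
  proof
    fix m assume m: "m \<in> car (Mmod p C \<infinity>)"
    have "b (a m) = (\<Sum>l<p. (MZ p C ^^ l) (Mtheta p h ((MZ p C ^^ (p - 1 - l)) m)))"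
      using ba m cp gm_zpow[OF G] by simp
    also have "\<dots> = Mmap \<alpha> m - m" using T m by simp
    finally show "Mmap \<alpha> m - m = b (a m)" by simp
  qed
  then show ?thesis by (rule stably_zero_via[OF H p0 G a b])
qed

lemma chain_comp:
  assumes C: "is_cx H UNIV C" and D: "is_cx H UNIV D"
    and s: "is_chain_map UNIV C D \<sigma>" and t: "is_chain_map UNIV D E \<tau>"
  shows "is_chain_map UNIV C E (\<lambda>i c. \<tau> i (\<sigma> i c))"
  unfolding is_chain_map_def
proof (intro conjI allI ballI)
  fix i
  show "is_hhom UNIV (cx_deg C i) (cx_deg E i) (\<lambda>c. \<tau> i (\<sigma> i c))"
    using s t by (auto simp: is_chain_map_def intro: hhom_comp)
  fix c assume c: "c \<in> cc C (Suc i)"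
  have "\<sigma> (Suc i) c \<in> cc D (Suc i)" using s c by (simp add: is_chain_map_def is_hhom_def)
  then show "\<tau> i (\<sigma> i (dd C (Suc i) c)) = dd E (Suc i) (\<tau> (Suc i) (\<sigma> (Suc i) c))"
    using s t c by (simp add: is_chain_map_def)
qed

lemma part5:
  fixes H :: "('b::finite,'k::field) hopf" and C :: "('c::ab_group_add,'b,'k) cx"
    and D :: "('d::ab_group_add,'b,'k) cx" and N :: "('n::ab_group_add,'b,'k) hmod"
  assumes H: "finite_group_scheme H" and p2: "2 \<le> p"
    and rC: "proj_resolution H C N epsC" and rD: "proj_resolution H D N epsD"
  shows "stable_iso p H (Mmod p C \<infinity>) (Mmod p D \<infinity>)"
proof -
  have C: "is_cx H UNIV C" and D: "is_cx H UNIV D" using rC rD by (simp_all add: proj_resolution_def)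
  obtain \<sigma> where s: "is_chain_map UNIV C D \<sigma>" and se: "\<forall>c\<in>cc C 0. epsD (\<sigma> 0 c) = epsC c"
    using comparison_exists[OF H rC rD] by blast
  obtain \<tau> where t: "is_chain_map UNIV D C \<tau>" and te: "\<forall>c\<in>cc D 0. epsC (\<tau> 0 c) = epsD c"
    using comparison_exists[OF H rD rC] by blast
  have s0: "\<sigma> 0 c \<in> cc D 0" if "c \<in> cc C 0" for c using s that by (simp add: is_chain_map_def is_hhom_def)
  have t0: "\<tau> 0 c \<in> cc C 0" if "c \<in> cc D 0" for c using t that by (simp add: is_chain_map_def is_hhom_def)
  have z1: "stably_zero p H (Mmod p C \<infinity>) (Mmod p C \<infinity>) (\<lambda>v. Mmap (\<lambda>i c. \<tau> i (\<sigma> i c)) v - v)"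
    by (rule selfmap_stably_zero[OF H p2 rC chain_comp[OF C D s t]]) (simp add: se te s0)
  have z2: "stably_zero p H (Mmod p D \<infinity>) (Mmod p D \<infinity>) (\<lambda>v. Mmap (\<lambda>i c. \<sigma> i (\<tau> i c)) v - v)"
    by (rule selfmap_stably_zero[OF H p2 rD chain_comp[OF D C t s]]) (simp add: se te t0)
  have e1: "Mmap (\<lambda>i c. \<tau> i (\<sigma> i c)) v = Mmap \<tau> (Mmap \<sigma> v)" for v by (simp add: Mmap_def)
  have e2: "Mmap (\<lambda>i c. \<sigma> i (\<tau> i c)) v = Mmap \<sigma> (Mmap \<tau> v)" for v by (simp add: Mmap_def)
  show ?thesis unfolding stable_iso_def
    using part1[OF C D s] part1[OF D C t] z1 z2 unfolding e1 e2 by blast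
qed

theorem lemma3p1:
  fixes H :: "('b::finite, 'k::field) hopf"
    and p :: nat
    and C :: "('c::ab_group_add, 'b, 'k) cx"
    and D :: "('d::ab_group_add, 'b, 'k) cx"
  assumes char: "CHAR('k) = p" and ppos: "p > 0"
    and H: "finite_group_scheme H"
    and C: "is_cx H UNIV C" and D: "is_cx H UNIV D"
  shows
   "(\<forall>\<sigma> n. is_chain_map UNIV C D \<sigma> \<and> n \<ge> 1 \<longrightarrow>
        is_ghom UNIV (Mmod p C n) (Mmod p D n) (Mmap \<sigma>)) \<and>
    (\<forall>n. n \<ge> 1 \<longrightarrow> (\<exists>f. is_giso UNIV (Mmod p (cx_sum C D) n) (gsum (Mmod p C n) (Mmod p D n)) f)) \<and>
    (\<forall>J n. subgroup_scheme H J \<and> n \<ge> 1 \<longrightarrow>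
        (\<exists>f. is_giso J (gres J (Mmod p C n)) (Mmod p (cx_res J C) n) f)) \<and>
    ((\<forall>i. hproj H (cx_deg C i)) \<and> cx_exact C \<longrightarrow> gproj p H (Mmod p C \<infinity>)) \<and>
    (\<forall>(N :: ('n::ab_group_add, 'b, 'k) hmod) epsC epsD.
        proj_resolution H C N epsC \<and> proj_resolution H D N epsD \<longrightarrow>
        stable_iso p H (Mmod p C \<infinity>) (Mmod p D \<infinity>))"
proof -
  have "p \<noteq> 1" using char CHAR_not_1[where 'a='k] by auto
  then have p2: "2 \<le> p" using ppos by linarith
  show ?thesis
  proof (intro conjI allI impI)
    fix \<sigma> and n :: enat assume "is_chain_map UNIV C D \<sigma> \<and> 1 \<le> n"
    then show "is_ghom UNIV (Mmod p C n) (Mmod p D n) (Mmap \<sigma>)" using part1[OF C D] by blast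
  next
    fix n :: enat
    show "\<exists>f. is_giso UNIV (Mmod p (cx_sum C D) n) (gsum (Mmod p C n) (Mmod p D n)) f" by (rule part2[OF C D])
  next
    fix J and n :: enat
    show "\<exists>f. is_giso J (gres J (Mmod p C n)) (Mmod p (cx_res J C) n) f" by (rule part3)
  next
    assume "(\<forall>i. hproj H (cx_deg C i)) \<and> cx_exact C"
    then show "gproj p H (Mmod p C \<infinity>)" using part4[OF H p2 C] by blast
  next
    fix N :: "('n::ab_group_add, 'b, 'k) hmod" and epsC epsD
    assume "proj_resolution H C N epsC \<and> proj_resolution H D N epsD"
    then show "stable_iso p H (Mmod p C \<infinity>) (Mmod p D \<infinity>)" using part5[OF H p2] by blast
  qed
qed

end
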